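(* Let $\Phi:\mathbb R^{d_0}\to\mathbb R^{d_{L+1}}$ be a feedforward neural network with continuous activation $\sigma$, let $\Sigma$ be an interval enclosure of $\sigma$ that is Hölder continuous on $\mathbb{IR}$, let $1\le p<\infty$, $\theta,\rho\in(0,1)$ and $\Omega\in\mathbb{IR}^{d_0}$ a box with nonempty interior. Let $f_{\Phi,0,p}(x)=\sum_{i=1}^{d_{L+1}}|\Phi_i(x)|^p$ and $F_{\Phi,0,p}(K)=\sum_{i=1}^{d_{L+1}}|\mathrm{Fval}_{\Phi,L+1,\Sigma}(K)_i|^p$. Then $f_{\Phi,0,p}$ is continuous, $F_{\Phi,0,p}$ is a Hölder continuous interval enclosure of $f_{\Phi,0,p}$ on $\Omega$, and running AdaQuad with integrand $f_{\Phi,0,p}$, enclosure $F_{\Phi,0,p}$, a positive-weight quadrature rule exact for constants, marking $\mathrm{D\ddot orfler}_\theta$ and refinement $\mathrm{H\ddot older}_\rho$ (with a Hölder constant and exponent of $F_{\Phi,0,p}$) yields, for all $n\in\mathbb N$, $$\big|\,\|\Phi\|_{L^p(\Omega;\mathbb R^{d_{L+1}})}-\mathrm Q_n^{1/p}\big|\le\eta_n^{1/p},\qquad \eta_{n+1}\le(1-\theta(1-\rho))\eta_n.$$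
   Context: $\|\Phi\|_{L^p(\Omega;\mathbb R^m)}=(\sum_{i=1}^m\int_\Omega|\Phi_i|^p\,dx)^{1/p}$. Intervals, boxes, interval arithmetic $X\circ Y=\{x\circ y\}$, width $w$ (max entry width for vectors), $|X|=\{|x|:x\in X\}$, $X^\gamma=[\underline X^\gamma,\overline X^\gamma]$ for $\underline X\ge0$. Interval enclosure of $\phi$ on $\Omega$: inclusion isotonic $F$ on boxes $K\subset\Omega$ with $\phi(K)\subset F(K)$; Hölder continuous: $w(F(K))\le Cw(K)^\gamma$ for all boxes $K\subset\Omega$, some $C>0$, $\gamma\in(0,1]$. Neural network: weights $W^{(\ell)}$, biases $b^{(\ell)}$, $z^{(\ell)}=W^{(\ell-1)}x^{(\ell-1)}+b^{(\ell-1)}$, $x^{(\ell)}=\sigma(z^{(\ell)})$, $x^{(0)}=u$, $\Phi=z^{(L+1)}$. $\mathrm{Fval}_{\Phi,\ell,\Sigma}(K)$: $X^{(0)}=K$; for $k=0,\dots,\ell-1$: $Z^{(k+1)}=W^{(k)}X^{(k)}+b^{(k)}$ (interval arithmetic), $X^{(k+1)}=\Sigma(Z^{(k+1)})$; return $Z^{(\ell)}$; subscript $i$ denotes the $i$-th component interval. AdaQuad: $\mathcal P_0=\{\Omega\}$; with $\eta_K=w(F(K))\mathrm{vol}(K)$, $\mathcal P_{n+1}=(\mathcal P_n\setminus\widetilde{\mathcal P}_n)\cup\bigcup_{K\in\widetilde{\mathcal P}_n}\mathcal R(K)$ where $\widetilde{\mathcal P}_n$ is the marked set; $\mathrm Q_n=\sum_{K\in\mathcal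 P_n}\mathcal I(f,K)$, $\eta_n=\sum_{K\in\mathcal P_n}\eta_K$. Quadrature rule $\mathcal I(f,K)=\sum_iw_if(x_i)$, $x_i\in K$, $w_i>0$, $\sum_iw_i=\mathrm{vol}(K)$. $\mathrm{D\ddot orfler}_\theta$: repeatedly mark all unmarked elements with maximal indicator until marked sum $\ge\theta$ times total. $\mathrm{H\ddot older}_\rho(K)$ with constant $C$, exponent $\gamma$: if $\eta_K=0$ return $\{K\}$; else split each side $K_i$ (length $l_i$) uniformly into $m_i=\lceil l_i(C\mathrm{vol}(K)/(\rho\eta_K))^{1/\gamma}\rceil$ pieces and return all product boxes. *)

theory Defs
  imports "HOL-Analysis.Analysis" "HOL-Library.Interval"
begin

type_synonym box = "real interval list"
type_synonym rvec = "nat \<Rightarrow> real"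

text \<open>Points of R^d are functions nat => real (coordinates j < d); the box K
  is the set of points whose j-th coordinate lies in the j-th interval.\<close>
definition set_box :: "box \<Rightarrow> rvec set" where
  "set_box K = (\<Pi>\<^sub>E j\<in>{..<length K}. set_of (K ! j))"

definition vol :: "box \<Rightarrow> real" where
  "vol K = (\<Prod>j<length K. width (K ! j))"

definition box_width :: "box \<Rightarrow> real" where
  "box_width K = Max (insert 0 (width ` set K))"

definition subbox :: "nat \<Rightarrow> box \<Rightarrow> box \<Rightarrow> bool" where
  "subbox dm \<Omega> K \<longleftrightarrow> length K = dm \<and> set_box K \<subseteq> set_box \<Omega>"

definition box_enclosure :: "nat \<Rightarrow> box \<Rightarrow> (rvec \<Rightarrow> real) \<Rightarrow> (box \<Rightarrow> real interval) \<Rightarrow> bool" where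
  "box_enclosure dm \<Omega> \<phi> F \<longleftrightarrow>
     (\<forall>K K'. subbox dm \<Omega> K \<longrightarrow> subbox dm \<Omega> K' \<longrightarrow> set_box K \<subseteq> set_box K'
        \<longrightarrow> set_of (F K) \<subseteq> set_of (F K')) \<and>
     (\<forall>K. subbox dm \<Omega> K \<longrightarrow> \<phi> ` set_box K \<subseteq> set_of (F K))"

definition box_holder :: "nat \<Rightarrow> box \<Rightarrow> (box \<Rightarrow> real interval) \<Rightarrow> real \<Rightarrow> real \<Rightarrow> bool" where
  "box_holder dm \<Omega> F C \<gamma> \<longleftrightarrow>
     (\<forall>K. subbox dm \<Omega> K \<longrightarrow> width (F K) \<le> C * box_width K powr \<gamma>)"

definition real_enclosure :: "(real \<Rightarrow> real) \<Rightarrow> (real interval \<Rightarrow> real interval) \<Rightarrow> bool" where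
  "real_enclosure \<sigma> \<Sigma> \<longleftrightarrow>
     (\<forall>X Y. set_of X \<subseteq> set_of Y \<longrightarrow> set_of (\<Sigma> X) \<subseteq> set_of (\<Sigma> Y)) \<and>
     (\<forall>X. \<sigma> ` set_of X \<subseteq> set_of (\<Sigma> X))"

definition real_holder :: "(real interval \<Rightarrow> real interval) \<Rightarrow> real \<Rightarrow> real \<Rightarrow> bool" where
  "real_holder \<Sigma> C \<gamma> \<longleftrightarrow> (\<forall>X. width (\<Sigma> X) \<le> C * width X powr \<gamma>)"

text \<open>X^gamma = [lower X ^ gamma, upper X ^ gamma] (used for X >= 0)\<close>
definition ipowr :: "real interval \<Rightarrow> real \<Rightarrow> real interval" where
  "ipowr X g = Ivl (lower X powr g) (upper X powr g)"

text \<open>Network data: L, widths d k (d 0 = input dm, d (L+1) = output dm),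
  weights W k i j (i < d (k+1), j < d k), biases b k i (i < d (k+1)).\<close>
definition affine :: "(nat \<Rightarrow> nat \<Rightarrow> nat \<Rightarrow> real) \<Rightarrow> (nat \<Rightarrow> nat \<Rightarrow> real) \<Rightarrow> (nat \<Rightarrow> nat)
    \<Rightarrow> nat \<Rightarrow> rvec \<Rightarrow> rvec" where
  "affine W b d k x = (\<lambda>i. (\<Sum>j<d k. W k i j * x j) + b k i)"

primrec nn_x :: "(real \<Rightarrow> real) \<Rightarrow> (nat \<Rightarrow> nat \<Rightarrow> nat \<Rightarrow> real) \<Rightarrow> (nat \<Rightarrow> nat \<Rightarrow> real)
    \<Rightarrow> (nat \<Rightarrow> nat) \<Rightarrow> nat \<Rightarrow> rvec \<Rightarrow> rvec" where
  "nn_x \<sigma> W b d 0 u = u"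
| "nn_x \<sigma> W b d (Suc k) u = (\<lambda>i. \<sigma> (affine W b d k (nn_x \<sigma> W b d k u) i))"

definition nn :: "(real \<Rightarrow> real) \<Rightarrow> (nat \<Rightarrow> nat \<Rightarrow> nat \<Rightarrow> real) \<Rightarrow> (nat \<Rightarrow> nat \<Rightarrow> real)
    \<Rightarrow> (nat \<Rightarrow> nat) \<Rightarrow> nat \<Rightarrow> rvec \<Rightarrow> rvec" where
  "nn \<sigma> W b d L u = affine W b d L (nn_x \<sigma> W b d L u)"

definition iaffine :: "(nat \<Rightarrow> nat \<Rightarrow> nat \<Rightarrow> real) \<Rightarrow> (nat \<Rightarrow> nat \<Rightarrow> real) \<Rightarrow> (nat \<Rightarrow> nat)
    \<Rightarrow> nat \<Rightarrow> (nat \<Rightarrow> real interval) \<Rightarrow> (nat \<Rightarrow> real interval)" where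
  "iaffine W b d k X = (\<lambda>i. (\<Sum>j<d k. interval_of (W k i j) * X j) + interval_of (b k i))"

primrec ival_x :: "(real interval \<Rightarrow> real interval) \<Rightarrow> (nat \<Rightarrow> nat \<Rightarrow> nat \<Rightarrow> real) \<Rightarrow> (nat \<Rightarrow> nat \<Rightarrow> real)
    \<Rightarrow> (nat \<Rightarrow> nat) \<Rightarrow> nat \<Rightarrow> box \<Rightarrow> (nat \<Rightarrow> real interval)" where
  "ival_x \<Sigma> W b d 0 K = (\<lambda>j. K ! j)"
| "ival_x \<Sigma> W b d (Suc k) K = (\<lambda>i. \<Sigma> (iaffine W b d k (ival_x \<Sigma> W b d k K) i))"

text \<open>Fval_{Phi,l,Sigma}(K) = Z^(l)  (for l >= 1)\<close>
definition Fval :: "(real interval \<Rightarrow> real interval) \<Rightarrow> (nat \<Rightarrow> nat \<Rightarrow> nat \<Rightarrow> real) \<Rightarrow> (nat \<Rightarrow> nat \<Rightarrow> real)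
    \<Rightarrow> (nat \<Rightarrow> nat) \<Rightarrow> nat \<Rightarrow> box \<Rightarrow> (nat \<Rightarrow> real interval)" where
  "Fval \<Sigma> W b d l K = iaffine W b d (l - 1) (ival_x \<Sigma> W b d (l - 1) K)"

definition f_Phi :: "(real \<Rightarrow> real) \<Rightarrow> (nat \<Rightarrow> nat \<Rightarrow> nat \<Rightarrow> real) \<Rightarrow> (nat \<Rightarrow> nat \<Rightarrow> real)
    \<Rightarrow> (nat \<Rightarrow> nat) \<Rightarrow> nat \<Rightarrow> real \<Rightarrow> rvec \<Rightarrow> real" where
  "f_Phi \<sigma> W b d L p x = (\<Sum>i<d (Suc L). \<bar>nn \<sigma> W b d L x i\<bar> powr p)"

definition F_Phi :: "(real interval \<Rightarrow> real interval) \<Rightarrow> (nat \<Rightarrow> nat \<Rightarrow> nat \<Rightarrow> real) \<Rightarrow> (nat \<Rightarrow> nat \<Rightarrow> real)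
    \<Rightarrow> (nat \<Rightarrow> nat) \<Rightarrow> nat \<Rightarrow> real \<Rightarrow> box \<Rightarrow> real interval" where
  "F_Phi \<Sigma> W b d L p K = (\<Sum>i<d (Suc L). ipowr (abs_interval (Fval \<Sigma> W b d (Suc L) K i)) p)"

definition lebesgue_d :: "nat \<Rightarrow> rvec measure" where
  "lebesgue_d dm = (\<Pi>\<^sub>M j\<in>{..<dm}. lborel)"

definition Lp_norm_nn :: "(real \<Rightarrow> real) \<Rightarrow> (nat \<Rightarrow> nat \<Rightarrow> nat \<Rightarrow> real) \<Rightarrow> (nat \<Rightarrow> nat \<Rightarrow> real)
    \<Rightarrow> (nat \<Rightarrow> nat) \<Rightarrow> nat \<Rightarrow> real \<Rightarrow> box \<Rightarrow> real" where
  "Lp_norm_nn \<sigma> W b d L p \<Omega> =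
     (\<Sum>i<d (Suc L). (LINT x:set_box \<Omega>|lebesgue_d (d 0). \<bar>nn \<sigma> W b d L x i\<bar> powr p)) powr (1 / p)"

definition quad :: "(box \<Rightarrow> (real \<times> rvec) list) \<Rightarrow> (rvec \<Rightarrow> real) \<Rightarrow> box \<Rightarrow> real" where
  "quad rule f K = (\<Sum>(w, x)\<leftarrow>rule K. w * f x)"

definition valid_quad_rule :: "nat \<Rightarrow> (box \<Rightarrow> (real \<times> rvec) list) \<Rightarrow> bool" where
  "valid_quad_rule dm rule \<longleftrightarrow>
     (\<forall>K. length K = dm \<longrightarrow>
        (\<forall>(w, x) \<in> set (rule K). w > 0 \<and> x \<in> set_box K) \<and>
        (\<Sum>(w, x)\<leftarrow>rule K. w) = vol K)"

definition eta :: "(box \<Rightarrow> real interval) \<Rightarrow> box \<Rightarrow> real" where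
  "eta F K = width (F K) * vol K"

text \<open>Doerfler marking: repeatedly mark all unmarked elements with maximal
  indicator, until the marked sum is at least theta times the total.\<close>
definition dorfler_step :: "(box \<Rightarrow> real) \<Rightarrow> box set \<Rightarrow> box set \<Rightarrow> box set" where
  "dorfler_step \<eta> P M = M \<union> {K \<in> P - M. \<eta> K = Max (\<eta> ` (P - M))}"

definition dorfler :: "real \<Rightarrow> (box \<Rightarrow> real) \<Rightarrow> box set \<Rightarrow> box set" where
  "dorfler \<theta> \<eta> P =
     (dorfler_step \<eta> P ^^
        (LEAST k. \<theta> * sum \<eta> P \<le> sum \<eta> ((dorfler_step \<eta> P ^^ k) {}))) {}"

text \<open>Hoelder refinement: split side i uniformly into m_i pieces.\<close>
definition piece :: "real interval \<Rightarrow> nat \<Rightarrow> nat \<Rightarrow> real interval" where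
  "piece X m k = Ivl (lower X + real k * width X / real m) (lower X + real (Suc k) * width X / real m)"

definition holder_refine :: "real \<Rightarrow> real \<Rightarrow> real \<Rightarrow> real \<Rightarrow> box \<Rightarrow> box set" where
  "holder_refine C \<gamma> \<rho> etaK K =
     (if etaK = 0 then {K}
      else (let m = (\<lambda>i. nat \<lceil>width (K ! i) * (C * vol K / (\<rho> * etaK)) powr (1 / \<gamma>)\<rceil>)
            in {K'. length K' = length K \<and>
                    (\<forall>i<length K. \<exists>k<m i. K' ! i = piece (K ! i) (m i) k)}))"

primrec adaquad_P :: "(box \<Rightarrow> real interval) \<Rightarrow> real \<Rightarrow> real \<Rightarrow> real \<Rightarrow> real \<Rightarrow> box \<Rightarrow> nat \<Rightarrow> box set" where
  "adaquad_P F \<theta> \<rho> C \<gamma> \<Omega> 0 = {\<Omega>}"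
| "adaquad_P F \<theta> \<rho> C \<gamma> \<Omega> (Suc n) =
     (let P = adaquad_P F \<theta> \<rho> C \<gamma> \<Omega> n; M = dorfler \<theta> (eta F) P
      in (P - M) \<union> (\<Union>K\<in>M. holder_refine C \<gamma> \<rho> (eta F K) K))"

definition adaquad_Q :: "(rvec \<Rightarrow> real) \<Rightarrow> (box \<Rightarrow> real interval) \<Rightarrow> (box \<Rightarrow> (real \<times> rvec) list)
    \<Rightarrow> real \<Rightarrow> real \<Rightarrow> real \<Rightarrow> real \<Rightarrow> box \<Rightarrow> nat \<Rightarrow> real" where
  "adaquad_Q f F rule \<theta> \<rho> C \<gamma> \<Omega> n = (\<Sum>K\<in>adaquad_P F \<theta> \<rho> C \<gamma> \<Omega> n. quad rule f K)"

definition adaquad_eta :: "(box \<Rightarrow> real interval) \<Rightarrow> real \<Rightarrow> real \<Rightarrow> real \<Rightarrow> real \<Rightarrow> box \<Rightarrow> nat \<Rightarrow> real" where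
  "adaquad_eta F \<theta> \<rho> C \<gamma> \<Omega> n = (\<Sum>K\<in>adaquad_P F \<theta> \<rho> C \<gamma> \<Omega> n. eta F K)"

end

theory Submission
  imports Defs
begin

lemma set_of_sum_inc:
  fixes f g :: "'i \<Rightarrow> real interval"
  shows "(\<And>j. j \<in> A \<Longrightarrow> set_of (f j) \<subseteq> set_of (g j)) \<Longrightarrow> set_of (sum f A) \<subseteq> set_of (sum g A)"
proof (induction A rule: infinite_finite_induct)
  case (insert x F)
  then show ?case by (simp add: set_of_add_inc)
qed auto

lemma sum_in_interval:
  fixes f :: "'i \<Rightarrow> real" and g :: "'i \<Rightarrow> real interval"
  shows "(\<And>j. j \<in> A \<Longrightarrow> f j \<in> set_of (g j)) \<Longrightarrow> sum f A \<in> set_of (sum g A)"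
proof (induction A rule: infinite_finite_induct)
  case (infinite A)
  then show ?case by (simp add: set_of_eq)
next
  case empty
  then show ?case by (simp add: set_of_eq)
next
  case (insert x F)
  then show ?case by (simp add: plus_in_intervalI)
qed

lemma iaffine_mono:
  assumes "\<And>j. j < d k \<Longrightarrow> set_of (X j) \<subseteq> set_of (Y j)"
  shows "set_of (iaffine W b d k X i) \<subseteq> set_of (iaffine W b d k Y i)"
  unfolding iaffine_def
  by (intro set_of_add_inc set_of_sum_inc set_of_mul_inc) (auto simp: assms)

lemma affine_in:
  assumes "\<And>j. j < d k \<Longrightarrow> x j \<in> set_of (X j)"
  shows "affine W b d k x i \<in> set_of (iaffine W b d k X i)"
  unfolding iaffine_def affine_def
  by (intro plus_in_intervalI sum_in_interval times_in_intervalI) (auto simp: assms)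

lemma ival_x_mono:
  fixes d :: "nat \<Rightarrow> nat" and W b K K'
  assumes encl: "real_enclosure \<sigma> \<Sigma>"
    and KK: "\<And>j. j < d 0 \<Longrightarrow> set_of (K ! j) \<subseteq> set_of (K' ! j)"
  shows "j < d k \<or> 0 < k \<Longrightarrow> set_of (ival_x \<Sigma> W b d k K j) \<subseteq> set_of (ival_x \<Sigma> W b d k K' j)"
proof (induction k arbitrary: j)
  case 0
  then show ?case using KK by simp
next
  case (Suc k)
  have "set_of (iaffine W b d k (ival_x \<Sigma> W b d k K) j) \<subseteq> set_of (iaffine W b d k (ival_x \<Sigma> W b d k K') j)"
    by (rule iaffine_mono) (use Suc in auto)
  then show ?case using encl unfolding real_enclosure_def by simp
qed

lemma ival_x_in:
  fixes d :: "nat \<Rightarrow> nat" and W b K x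
  assumes encl: "real_enclosure \<sigma> \<Sigma>"
    and xK: "\<And>j. j < d 0 \<Longrightarrow> x j \<in> set_of (K ! j)"
  shows "j < d k \<or> 0 < k \<Longrightarrow> nn_x \<sigma> W b d k x j \<in> set_of (ival_x \<Sigma> W b d k K j)"
proof (induction k arbitrary: j)
  case 0
  then show ?case using xK by simp
next
  case (Suc k)
  have "affine W b d k (nn_x \<sigma> W b d k x) j \<in> set_of (iaffine W b d k (ival_x \<Sigma> W b d k K) j)"
    by (rule affine_in) (use Suc in auto)
  then show ?case using encl unfolding real_enclosure_def by (simp add: image_subset_iff)
qed

lemma Fval_mono:
  assumes encl: "real_enclosure \<sigma> \<Sigma>"
    and KK: "\<And>j. j < d 0 \<Longrightarrow> set_of (K ! j) \<subseteq> set_of (K' ! j)"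
  shows "set_of (Fval \<Sigma> W b d (Suc L) K i) \<subseteq> set_of (Fval \<Sigma> W b d (Suc L) K' i)"
  unfolding Fval_def using ival_x_mono[where d=d and W=W and b=b, OF encl KK] by (auto intro!: iaffine_mono)

lemma nn_in:
  assumes encl: "real_enclosure \<sigma> \<Sigma>"
    and xK: "\<And>j. j < d 0 \<Longrightarrow> x j \<in> set_of (K ! j)"
  shows "nn \<sigma> W b d L x i \<in> set_of (Fval \<Sigma> W b d (Suc L) K i)"
  unfolding Fval_def nn_def using ival_x_in[where d=d and W=W and b=b, OF encl xK] by (auto intro!: affine_in)

lemma lower_Ivl: "(a::real) \<le> b \<Longrightarrow> lower (Ivl a b) = a"
  by (simp add: lower.rep_eq Ivl.rep_eq min_def)

lemma upper_Ivl: "upper (Ivl (a::real) b) = b"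
  by (simp add: upper.rep_eq Ivl.rep_eq)

lemma lower_ipowr: "0 \<le> lower X \<Longrightarrow> 0 \<le> g \<Longrightarrow> lower (ipowr X g) = lower X powr g"
  unfolding ipowr_def by (rule lower_Ivl) (simp add: powr_mono2)

lemma upper_ipowr: "upper (ipowr X g) = upper X powr g"
  unfolding ipowr_def by (rule upper_Ivl)

lemma ipowr_mono:
  assumes "set_of X \<subseteq> set_of Y" "0 \<le> lower Y" "0 \<le> g"
  shows "set_of (ipowr X g) \<subseteq> set_of (ipowr Y g)"
proof -
  have "lower Y \<le> lower X" "upper X \<le> upper Y" using assms(1) lower_le_upper[of X]
    by (auto simp: set_of_eq)
  have "0 \<le> upper X" using assms \<open>lower Y \<le> lower X\<close> lower_le_upper[of X] by linarith
  have "lower Y powr g \<le> lower X powr g" "upper X powr g \<le> upper Y powr g"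
    using assms lower_le_upper[of X] \<open>lower Y \<le> lower X\<close> \<open>upper X \<le> upper Y\<close> \<open>0 \<le> upper X\<close>
    by (auto intro!: powr_mono2)
  moreover have "lower X powr g \<le> upper X powr g" "lower Y powr g \<le> upper Y powr g"
    using assms \<open>0 \<le> upper X\<close> \<open>lower Y \<le> lower X\<close> lower_le_upper[of X] lower_le_upper[of Y] by (auto intro!: powr_mono2)
  ultimately show ?thesis unfolding ipowr_def set_of_eq by (simp add: lower_Ivl upper_Ivl)
qed

lemma in_ipowr:
  assumes "x \<in> set_of X" "0 \<le> lower X" "0 \<le> g"
  shows "x powr g \<in> set_of (ipowr X g)"
  using assms by (auto simp: set_of_eq lower_ipowr upper_ipowr intro!: powr_mono2)

lemma abs_interval_mono:
  "set_of X \<subseteq> set_of Y \<Longrightarrow> set_of (abs_interval X) \<subseteq> set_of (abs_interval Y)"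
  by (auto simp: set_of_abs_interval)

lemma lower_abs_nonneg: "0 \<le> lower (abs_interval (X::real interval))"
  by simp

lemma width_nonneg: "0 \<le> width (X::real interval)"
  by (simp add: width_def)

lemma width_plus: "width (A + B) = width A + width (B::real interval)"
  by (simp add: width_def)

lemma width_sum: "width (sum (f::'i \<Rightarrow> real interval) A) = (\<Sum>j\<in>A. width (f j))"
  by (induction A rule: infinite_finite_induct) (auto simp: width_plus width_def)

lemma width_scale: "width (interval_of w * X) = \<bar>w\<bar> * width (X::real interval)"
proof -
  have l: "lower X \<le> upper X" by simp
  show ?thesis
  proof (cases "0 \<le> w")
    case True
    then have "w * lower X \<le> w * upper X" using l by (simp add: mult_left_mono)
    then show ?thesis using True by (simp add: width_def lower_times upper_times min_def max_def algebra_simps)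
  next
    case False
    then have "w * upper X \<le> w * lower X" using l by (simp add: mult_left_mono_neg)
    then show ?thesis using False l apply (simp add: width_def lower_times upper_times min_def max_def algebra_simps)
      using l by linarith
  qed
qed

lemma width_iaffine: "width (iaffine W b d k X i) = (\<Sum>j<d k. \<bar>W k i j\<bar> * width (X j))"
  unfolding iaffine_def by (simp add: width_plus width_sum width_scale width_def[of "interval_of _"])

lemma width_abs: "width (abs_interval (X::real interval)) \<le> width X"
  unfolding width_def apply (auto simp: abs_if min_def max_def)
  using lower_le_upper[of X] by linarith+

lemma width_le_box_width: "j < length K \<Longrightarrow> width (K ! j) \<le> box_width K"
  unfolding box_width_def by (intro Max_ge) auto

lemma box_width_nonneg: "0 \<le> box_width K"
  unfolding box_width_def by (intro Max_ge) auto

lemma powr_diff_le: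
  fixes l u M p :: real
  assumes "0 \<le> l" "l \<le> u" "u \<le> M" "1 \<le> p"
  shows "u powr p - l powr p \<le> p * M powr (p - 1) * (u - l)"
proof (cases "l = u")
  case True then show ?thesis by simp
next
  case False
  then have lu: "l < u" using assms by simp
  show ?thesis
  proof (cases "l = 0")
    case True
    have "u powr p = u powr (p - 1) * u powr 1"
      by (metis add.commute diff_add_cancel powr_add)
    also have "\<dots> = u powr (p - 1) * u" using assms by simp
    also have "\<dots> \<le> M powr (p - 1) * u" using assms lu True
      by (intro mult_right_mono powr_mono2) auto
    also have "\<dots> \<le> p * M powr (p - 1) * u" using assms lu True
      by (intro mult_right_mono) auto
    finally show ?thesis using True assms by simp
  next
    case False
    then have l0: "0 < l" using assms by simp
    have "\<exists>z. l < z \<and> z < u \<and> u powr p - l powr p = (u - l) * (p * z powr (p - 1))"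
      by (rule MVT2[OF lu]) (use l0 in \<open>auto intro!: has_real_derivative_powr\<close>)
    then obtain z where z: "l < z" "z < u" "u powr p - l powr p = (u - l) * (p * z powr (p - 1))" by blast
    have "z powr (p - 1) \<le> M powr (p - 1)" using z l0 assms by (intro powr_mono2) auto
    then have "(u - l) * (p * z powr (p - 1)) \<le> (u - l) * (p * M powr (p - 1))"
      using lu assms by (intro mult_left_mono) auto
    then show ?thesis using z by (simp add: algebra_simps)
  qed
qed

lemma width_ipowr:
  assumes "0 \<le> lower X" "upper X \<le> M" "1 \<le> p"
  shows "width (ipowr X p) \<le> p * M powr (p - 1) * width X"
  using powr_diff_le[OF assms(1) lower_le_upper[of X] assms(2,3)] assms
  unfolding width_def
  by (simp add: lower_ipowr upper_ipowr)

lemma set_box_subset_comp: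
  assumes "length K = length K'" "set_box K \<subseteq> set_box K'" "j < length K"
  shows "set_of (K ! j) \<subseteq> set_of (K' ! j)"
proof
  fix t assume t: "t \<in> set_of (K ! j)"
  define x where "x = restrict (\<lambda>i. if i = j then t else lower (K ! i)) {..<length K}"
  have "x \<in> set_box K" unfolding set_box_def x_def using t by (auto simp: set_of_eq)
  then have "x \<in> set_box K'" using assms by auto
  then have "x j \<in> set_of (K' ! j)" unfolding set_box_def using assms(1,3) by (auto simp: PiE_iff)
  then show "t \<in> set_of (K' ! j)" unfolding x_def using assms(3) by simp
qed

lemma upper_mono_subset: "set_of X \<subseteq> set_of Y \<Longrightarrow> upper X \<le> upper (Y::real interval)"
  by (metis atLeastAtMost_iff lower_le_upper order_refl set_of_eq subsetD)

lemma width_iaffine_bound: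
  assumes "\<And>j. j < d k \<Longrightarrow> width (X j) \<le> B" "0 \<le> B" "i < d (Suc k)"
  shows "width (iaffine W b d k X i) \<le> (1 + (\<Sum>i<d (Suc k). \<Sum>j<d k. \<bar>W k i j\<bar>)) * B"
proof -
  have "width (iaffine W b d k X i) = (\<Sum>j<d k. \<bar>W k i j\<bar> * width (X j))" by (rule width_iaffine)
  also have "\<dots> \<le> (\<Sum>j<d k. \<bar>W k i j\<bar> * B)" using assms by (intro sum_mono mult_left_mono) auto
  also have "\<dots> = (\<Sum>j<d k. \<bar>W k i j\<bar>) * B" by (simp add: sum_distrib_right)
  also have "(\<Sum>j<d k. \<bar>W k i j\<bar>) \<le> (\<Sum>i<d (Suc k). \<Sum>j<d k. \<bar>W k i j\<bar>)"
    using assms(3) by (intro member_le_sum) (auto intro: sum_nonneg)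
  then have "(\<Sum>j<d k. \<bar>W k i j\<bar>) * B \<le> (1 + (\<Sum>i<d (Suc k). \<Sum>j<d k. \<bar>W k i j\<bar>)) * B"
    using assms(2) by (intro mult_right_mono) auto
  finally show ?thesis .
qed

lemma ival_holder:
  assumes hS: "real_holder \<Sigma> CS \<gamma>S" "CS > 0" "0 < \<gamma>S" "\<gamma>S \<le> 1"
  shows "\<exists>C \<gamma>. C > 0 \<and> 0 < \<gamma> \<and> \<gamma> \<le> 1 \<and> (\<forall>K::box. length K = d 0 \<longrightarrow>
            (\<forall>j<d k. width (ival_x \<Sigma> W b d k K j) \<le> C * box_width K powr \<gamma>))"
proof (induction k)
  case 0
  show ?case
    by (rule exI[of _ 1], rule exI[of _ 1])
       (auto simp: powr_one box_width_nonneg width_le_box_width)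
next
  case (Suc k)
  then obtain C \<gamma> where C: "C > 0" "0 < \<gamma>" "\<gamma> \<le> 1"
    and hC: "\<And>K j. length K = d 0 \<Longrightarrow> j < d k \<Longrightarrow> width (ival_x \<Sigma> W b d k K j) \<le> C * box_width K powr \<gamma>"
    by blast
  define A where "A = 1 + (\<Sum>i<d (Suc k). \<Sum>j<d k. \<bar>W k i j\<bar>)"
  have A: "A > 0" unfolding A_def by (smt (verit) sum_nonneg abs_ge_zero)
  show ?case
  proof (intro exI conjI allI impI)
    show "CS * (A * C) powr \<gamma>S > 0" using A C hS by simp
    show "0 < \<gamma> * \<gamma>S" using C hS by simp
    show "\<gamma> * \<gamma>S \<le> 1" using C hS by (simp add: mult_le_one)
    fix K :: box and i assume K: "length K = d 0" and i: "i < d (Suc k)"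
    have w: "width (iaffine W b d k (ival_x \<Sigma> W b d k K) i) \<le> A * (C * box_width K powr \<gamma>)"
      unfolding A_def by (rule width_iaffine_bound) (use hC[OF K] C i in auto)
    have "width (ival_x \<Sigma> W b d (Suc k) K i) \<le> CS * width (iaffine W b d k (ival_x \<Sigma> W b d k K) i) powr \<gamma>S"
      using hS(1) unfolding real_holder_def by simp
    also have "\<dots> \<le> CS * (A * (C * box_width K powr \<gamma>)) powr \<gamma>S"
      using w hS by (intro mult_left_mono powr_mono2) (auto simp: width_nonneg)
    also have "\<dots> = CS * (A * C) powr \<gamma>S * box_width K powr (\<gamma> * \<gamma>S)"
      by (simp add: powr_mult powr_powr mult.assoc)
    finally show "width (ival_x \<Sigma> W b d (Suc k) K i) \<le> CS * (A * C) powr \<gamma>S * box_width K powr (\<gamma> * \<gamma>S)" .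
  qed
qed

lemma F_holder:
  assumes encl: "real_enclosure \<sigma> \<Sigma>"
    and hold: "\<exists>C \<gamma>. C > 0 \<and> 0 < \<gamma> \<and> \<gamma> \<le> 1 \<and> real_holder \<Sigma> C \<gamma>"
    and p: "1 \<le> p" and Om: "length \<Omega> = d 0"
  shows "\<exists>C \<gamma>. C > 0 \<and> 0 < \<gamma> \<and> \<gamma> \<le> 1 \<and> box_holder (d 0) \<Omega> (F_Phi \<Sigma> W b d L p) C \<gamma>"
proof -
  obtain CS \<gamma>S where hS: "CS > 0" "0 < \<gamma>S" "\<gamma>S \<le> 1" "real_holder \<Sigma> CS \<gamma>S" using hold by blast
  obtain C \<gamma> where C: "C > 0" "0 < \<gamma>" "\<gamma> \<le> 1"
    and hC: "\<And>K j. length K = d 0 \<Longrightarrow> j < d L \<Longrightarrow> width (ival_x \<Sigma> W b d L K j) \<le> C * box_width K powr \<gamma>"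
    using ival_holder[OF hS(4,1,2,3), of d L W b] by blast
  define A where "A = 1 + (\<Sum>i<d (Suc L). \<Sum>j<d L. \<bar>W L i j\<bar>)"
  have A: "A > 0" unfolding A_def by (smt (verit) sum_nonneg abs_ge_zero)
  define M where "M i = upper (abs_interval (Fval \<Sigma> W b d (Suc L) \<Omega> i))" for i
  define S where "S = 1 + (\<Sum>i<d (Suc L). p * M i powr (p - 1))"
  have S: "S > 0" unfolding S_def using p by (smt (verit) sum_nonneg mult_nonneg_nonneg powr_ge_zero)
  show ?thesis
  proof (intro exI conjI)
    show "S * A * C > 0" using S A C by simp
    show "0 < \<gamma>" "\<gamma> \<le> 1" using C by auto
    show "box_holder (d 0) \<Omega> (F_Phi \<Sigma> W b d L p) (S * A * C) \<gamma>"
      unfolding box_holder_def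
    proof (intro allI impI)
      fix K assume K: "subbox (d 0) \<Omega> K"
      then have lenK: "length K = d 0" by (simp add: subbox_def)
      have comp: "\<And>j. j < d 0 \<Longrightarrow> set_of (K ! j) \<subseteq> set_of (\<Omega> ! j)"
        using set_box_subset_comp[of K \<Omega>] K Om by (auto simp: subbox_def)
      have wF: "width (Fval \<Sigma> W b d (Suc L) K i) \<le> A * (C * box_width K powr \<gamma>)" if "i < d (Suc L)" for i
        unfolding A_def Fval_def using that
        by (simp, intro width_iaffine_bound) (use hC[OF lenK] C in auto)
      have Mi: "upper (abs_interval (Fval \<Sigma> W b d (Suc L) K i)) \<le> M i" for i
      proof -
        have "set_of (abs_interval (Fval \<Sigma> W b d (Suc L) K i)) \<subseteq> set_of (abs_interval (Fval \<Sigma> W b d (Suc L) \<Omega> i))"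
          by (intro abs_interval_mono Fval_mono[OF encl]) (use comp in auto)
        then show ?thesis unfolding M_def by (rule upper_mono_subset)
      qed
      have "width (F_Phi \<Sigma> W b d L p K) = (\<Sum>i<d (Suc L). width (ipowr (abs_interval (Fval \<Sigma> W b d (Suc L) K i)) p))"
        unfolding F_Phi_def by (rule width_sum)
      also have "\<dots> \<le> (\<Sum>i<d (Suc L). p * M i powr (p - 1) * (A * (C * box_width K powr \<gamma>)))"
      proof (intro sum_mono)
        fix i assume i: "i \<in> {..<d (Suc L)}"
        have "width (ipowr (abs_interval (Fval \<Sigma> W b d (Suc L) K i)) p)
              \<le> p * M i powr (p - 1) * width (abs_interval (Fval \<Sigma> W b d (Suc L) K i))"
          by (rule width_ipowr) (use Mi p in auto)
        also have "\<dots> \<le> p * M i powr (p - 1) * (A * (C * box_width K powr \<gamma>))"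
          using p width_abs wF i by (intro mult_left_mono) (auto intro: order_trans)
        finally show "width (ipowr (abs_interval (Fval \<Sigma> W b d (Suc L) K i)) p)
              \<le> p * M i powr (p - 1) * (A * (C * box_width K powr \<gamma>))" .
      qed
      also have "\<dots> = (\<Sum>i<d (Suc L). p * M i powr (p - 1)) * (A * (C * box_width K powr \<gamma>))"
        by (simp add: sum_distrib_right)
      also have "\<dots> \<le> S * (A * (C * box_width K powr \<gamma>))"
        unfolding S_def using A C by (intro mult_right_mono) auto
      finally show "width (F_Phi \<Sigma> W b d L p K) \<le> S * A * C * box_width K powr \<gamma>" by (simp add: mult.assoc)
    qed
  qed
qed

lemma F_mono:
  assumes encl: "real_enclosure \<sigma> \<Sigma>" and p: "0 \<le> p"
    and KK: "\<And>j. j < d 0 \<Longrightarrow> set_of (K ! j) \<subseteq> set_of (K' ! j)"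
  shows "set_of (F_Phi \<Sigma> W b d L p K) \<subseteq> set_of (F_Phi \<Sigma> W b d L p K')"
  unfolding F_Phi_def
  by (intro set_of_sum_inc ipowr_mono abs_interval_mono Fval_mono[OF encl]) (use KK p in auto)

lemma f_in_F:
  assumes encl: "real_enclosure \<sigma> \<Sigma>" and p: "0 \<le> p"
    and xK: "\<And>j. j < d 0 \<Longrightarrow> x j \<in> set_of (K ! j)"
  shows "f_Phi \<sigma> W b d L p x \<in> set_of (F_Phi \<Sigma> W b d L p K)"
  unfolding F_Phi_def f_Phi_def
proof (intro sum_in_interval in_ipowr)
  fix i
  show "\<bar>nn \<sigma> W b d L x i\<bar> \<in> set_of (abs_interval (Fval \<Sigma> W b d (Suc L) K i))"
    unfolding set_of_abs_interval using nn_in[OF encl xK] by blast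
qed (use p in auto)

lemma set_box_comp: "x \<in> set_box K \<Longrightarrow> j < length K \<Longrightarrow> x j \<in> set_of (K ! j)"
  unfolding set_box_def by auto

lemma F_encl:
  assumes encl: "real_enclosure \<sigma> \<Sigma>" and p: "0 \<le> p" and Om: "length \<Omega> = d 0"
  shows "box_enclosure (d 0) \<Omega> (f_Phi \<sigma> W b d L p) (F_Phi \<Sigma> W b d L p)"
  unfolding box_enclosure_def
proof (intro conjI allI impI)
  fix K K' assume "subbox (d 0) \<Omega> K" "subbox (d 0) \<Omega> K'" "set_box K \<subseteq> set_box K'"
  then show "set_of (F_Phi \<Sigma> W b d L p K) \<subseteq> set_of (F_Phi \<Sigma> W b d L p K')"
    by (intro F_mono[OF encl p] set_box_subset_comp) (auto simp: subbox_def)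
next
  fix K assume "subbox (d 0) \<Omega> K"
  then show "f_Phi \<sigma> W b d L p ` set_box K \<subseteq> set_of (F_Phi \<Sigma> W b d L p K)"
    by (auto intro!: f_in_F[OF encl p] set_box_comp simp: subbox_def)
qed

lemma nn_x_cont:
  assumes cont: "continuous_on UNIV \<sigma>"
  shows "continuous_on UNIV (\<lambda>x. nn_x \<sigma> W b d k x j)"
proof (induction k arbitrary: j)
  case 0
  then show ?case by simp
next
  case (Suc k)
  have "continuous_on UNIV (\<lambda>x. affine W b d k (nn_x \<sigma> W b d k x) j)"
    unfolding affine_def by (intro continuous_intros Suc)
  then show ?case using continuous_on_compose2[OF cont] by fastforce
qed

lemma f_cont:
  assumes cont: "continuous_on UNIV \<sigma>" and p: "1 \<le> p"
  shows "continuous_on UNIV (f_Phi \<sigma> W b d L p)"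
proof -
  have c: "continuous_on UNIV (\<lambda>x. nn \<sigma> W b d L x i)" for i
    unfolding nn_def affine_def by (intro continuous_intros nn_x_cont[OF cont])
  show ?thesis
    unfolding f_Phi_def
    by (intro continuous_on_sum continuous_on_powr' continuous_intros c) (use p in auto)
qed

interpretation leb_prod: product_sigma_finite "\<lambda>_::nat. lborel :: real measure"
  by (simp add: product_sigma_finite_def sigma_finite_lborel)

lemma space_leb: "space (lebesgue_d dm) = (\<Pi>\<^sub>E i\<in>{..<dm}. UNIV)"
  unfolding lebesgue_d_def by (simp add: space_PiM)

lemma set_box_sets: "length K = dm \<Longrightarrow> set_box K \<in> sets (lebesgue_d dm)"
  unfolding lebesgue_d_def set_box_def by (auto intro!: sets_PiM_I_finite simp: set_of_eq)

lemma emeasure_set_box: "length K = dm \<Longrightarrow> emeasure (lebesgue_d dm) (set_box K) = ennreal (vol K)"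
proof -
  assume K: "length K = dm"
  have sb: "set_box K = (\<Pi>\<^sub>E j\<in>{..<dm}. set_of (K ! j))" using K by (simp add: set_box_def)
  have "emeasure (lebesgue_d dm) (set_box K) = (\<Prod>j<dm. emeasure lborel (set_of (K ! j)))"
    unfolding lebesgue_d_def sb
    by (rule leb_prod.emeasure_PiM) (auto simp: set_of_eq)
  also have "\<dots> = (\<Prod>j<dm. ennreal (width (K ! j)))"
    by (simp add: set_of_eq width_def)
  also have "\<dots> = ennreal (vol K)"
    unfolding vol_def using K by (simp add: prod_ennreal width_nonneg)
  finally show ?thesis .
qed

lemma vol_nonneg: "0 \<le> vol K"
  unfolding vol_def by (simp add: prod_nonneg width_nonneg)

lemma measure_set_box: "length K = dm \<Longrightarrow> measure (lebesgue_d dm) (set_box K) = vol K"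
  by (simp add: measure_def emeasure_set_box vol_nonneg)

lemma null_hyper:
  assumes "j < dm"
  shows "{x \<in> space (lebesgue_d dm). x j = c} \<in> null_sets (lebesgue_d dm)"
proof -
  have eq: "{x \<in> space (lebesgue_d dm). x j = c} = (\<Pi>\<^sub>E i\<in>{..<dm}. if i = j then {c} else UNIV)"
  proof (intro set_eqI iffI)
    fix x assume "x \<in> {x \<in> space (lebesgue_d dm). x j = c}"
    then show "x \<in> (\<Pi>\<^sub>E i\<in>{..<dm}. if i = j then {c} else UNIV)"
      by (auto simp: space_leb PiE_iff)
  next
    fix x assume "x \<in> (\<Pi>\<^sub>E i\<in>{..<dm}. if i = j then {c} else UNIV)"
    then show "x \<in> {x \<in> space (lebesgue_d dm). x j = c}"
      using assms by (auto simp: space_leb PiE_iff) (metis lessThan_iff singletonD)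
  qed
  have "emeasure (lebesgue_d dm) (\<Pi>\<^sub>E i\<in>{..<dm}. if i = j then {c} else UNIV)
      = (\<Prod>i<dm. emeasure lborel (if i = j then {c} else UNIV))"
    unfolding lebesgue_d_def by (subst leb_prod.emeasure_PiM) auto
  also have "\<dots> = 0"
    using assms by (intro prod_zero bexI[of _ j]) auto
  moreover have "(\<Pi>\<^sub>E i\<in>{..<dm}. if i = j then {c} else UNIV) \<in> sets (lebesgue_d dm)"
    unfolding lebesgue_d_def by (rule sets_PiM_I_finite) auto
  ultimately show ?thesis unfolding eq by (intro null_setsI) auto
qed

lemma nn_x_meas:
  assumes cont: "continuous_on UNIV \<sigma>"
  shows "j < d k \<or> 0 < k \<Longrightarrow> (\<lambda>x. nn_x \<sigma> W b d k x j) \<in> borel_measurable (lebesgue_d (d 0))"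
proof (induction k arbitrary: j)
  case 0
  then show ?case unfolding lebesgue_d_def by simp
next
  case (Suc k)
  have "(\<lambda>x. affine W b d k (nn_x \<sigma> W b d k x) j) \<in> borel_measurable (lebesgue_d (d 0))"
    unfolding affine_def using Suc by (intro borel_measurable_add borel_measurable_sum borel_measurable_times) auto
  then show ?case using borel_measurable_continuous_onI[OF cont] by simp
qed

lemma nn_meas:
  assumes cont: "continuous_on UNIV \<sigma>"
  shows "(\<lambda>x. nn \<sigma> W b d L x i) \<in> borel_measurable (lebesgue_d (d 0))"
  unfolding nn_def affine_def using nn_x_meas[OF cont]
  by (intro borel_measurable_add borel_measurable_sum borel_measurable_times) auto

lemma f_meas:
  assumes cont: "continuous_on UNIV \<sigma>"
  shows "f_Phi \<sigma> W b d L p \<in> borel_measurable (lebesgue_d (d 0))"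
  unfolding f_Phi_def by (intro borel_measurable_sum measurable_abs_powr nn_meas[OF cont])

lemma absp_meas:
  assumes cont: "continuous_on UNIV \<sigma>"
  shows "(\<lambda>x. \<bar>nn \<sigma> W b d L x i\<bar> powr p) \<in> borel_measurable (lebesgue_d (d 0))"
  by (intro measurable_abs_powr nn_meas[OF cont])

lemma set_integrable_bounded:
  fixes g :: "_ \<Rightarrow> real"
  assumes "A \<in> sets M" "emeasure M A < \<infinity>" "g \<in> borel_measurable M" "\<And>x. x \<in> A \<Longrightarrow> \<bar>g x\<bar> \<le> B"
  shows "set_integrable M A g"
proof (rule set_integrable_bound)
  show "set_integrable M A (\<lambda>_. B)"
    unfolding set_integrable_def using assms(1,2) by simp
  show "set_borel_measurable M A g" unfolding set_borel_measurable_def using assms by measurable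
  show "AE x in M. x \<in> A \<longrightarrow> norm (g x) \<le> norm B"
    using assms(4) by (auto intro!: AE_I2) (smt (verit))
qed

lemma piece_le: "lower X + real k * width X / real m \<le> lower X + real (Suc k) * width X / real m"
  using width_nonneg[of X] by (intro add_left_mono divide_right_mono mult_right_mono) auto

lemma lower_piece: "lower (piece X m k) = lower X + real k * width X / real m"
  unfolding piece_def using piece_le by (rule lower_Ivl)

lemma upper_piece: "upper (piece X m k) = lower X + real (Suc k) * width X / real m"
  unfolding piece_def by (rule upper_Ivl)

lemma width_piece: "width (piece X m k) = width X / real m"
proof -
  have "real (Suc k) * width X / real m - real k * width X / real m = width X / real m"
    by (simp add: diff_divide_distrib[symmetric] algebra_simps)
  then show ?thesis unfolding width_def[of "piece X m k"] lower_piece upper_piece by simp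
qed

lemma piece_sub:
  assumes "k < m"
  shows "set_of (piece X m k) \<subseteq> set_of X"
proof -
  have w: "0 \<le> width X" by (rule width_nonneg)
  have lo: "lower X \<le> lower (piece X m k)" unfolding lower_piece using w by simp
  have m: "0 < real m" using assms by simp
  have "real (Suc k) * width X \<le> real m * width X" using assms w by (intro mult_right_mono) auto
  then have "real (Suc k) * width X / real m \<le> width X"
    using m by (simp add: divide_le_eq mult.commute)
  then have "upper (piece X m k) \<le> upper X" unfolding upper_piece width_def by simp
  with lo show ?thesis by (auto simp: set_of_eq)
qed

lemma piece_cover:
  assumes t: "t \<in> set_of X" and m: "0 < m"
  shows "\<exists>k<m. t \<in> set_of (piece X m k)"
proof (cases "width X = 0")
  case True
  then have "t = lower X" using t by (auto simp: set_of_eq width_def)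
  then show ?thesis using m True by (intro exI[of _ 0]) (auto simp: set_of_eq lower_piece upper_piece)
next
  case False
  then have w: "0 < width X" using width_nonneg[of X] by simp
  define q where "q = (t - lower X) * real m / width X"
  have q0: "0 \<le> q" using t w by (auto simp: q_def set_of_eq)
  have "(t - lower X) * real m \<le> width X * real m"
    by (rule mult_right_mono) (use t in \<open>auto simp: set_of_eq width_def\<close>)
  then have "q \<le> width X * real m / width X" unfolding q_def using w by (intro divide_right_mono) auto
  then have qm: "q \<le> real m" using w by simp
  define k where "k = min (m - 1) (nat \<lfloor>q\<rfloor>)"
  have km: "k < m" using m by (simp add: k_def)
  have "real k \<le> q" unfolding k_def using q0 by (simp add: min_def) linarith
  then have "real k * width X / real m \<le> t - lower X"
    using w m by (simp add: q_def field_simps)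
  then have lo: "lower (piece X m k) \<le> t" unfolding lower_piece by simp
  have "q \<le> real (Suc k)"
  proof (cases "nat \<lfloor>q\<rfloor> \<le> m - 1")
    case True
    then have "k = nat \<lfloor>q\<rfloor>" by (simp add: k_def)
    then show ?thesis using q0 by linarith
  next
    case False
    then have "k = m - 1" by (simp add: k_def)
    then show ?thesis using qm m by simp
  qed
  then have "t - lower X \<le> real (Suc k) * width X / real m"
    using w m by (simp add: q_def field_simps)
  then have hi: "t \<le> upper (piece X m k)" unfolding upper_piece by simp
  show ?thesis using km lo hi by (auto simp: set_of_eq)
qed

lemma piece_sep:
  assumes "k1 < k2"
  shows "upper (piece X m k1) \<le> lower (piece X m k2)"
  unfolding upper_piece lower_piece using assms width_nonneg[of X]
  by (intro add_left_mono divide_right_mono mult_right_mono) auto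

lemma piece_pos:
  assumes "0 < width X" "0 < m"
  shows "lower (piece X m k) < upper (piece X m k)"
  using assms unfolding upper_piece lower_piece by (simp add: field_simps)

definition Rset :: "box \<Rightarrow> (nat \<Rightarrow> nat) \<Rightarrow> box set" where
  "Rset K m = {K'. length K' = length K \<and> (\<forall>i<length K. \<exists>k<m i. K' ! i = piece (K ! i) (m i) k)}"

definition mkbox :: "box \<Rightarrow> (nat \<Rightarrow> nat) \<Rightarrow> (nat \<Rightarrow> nat) \<Rightarrow> box" where
  "mkbox K m ks = map (\<lambda>i. piece (K ! i) (m i) (ks i)) [0..<length K]"

lemma holder_refine_Rset:
  "e \<noteq> 0 \<Longrightarrow> holder_refine C \<gamma> \<rho> e K =
     Rset K (\<lambda>i. nat \<lceil>width (K ! i) * (C * vol K / (\<rho> * e)) powr (1 / \<gamma>)\<rceil>)"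
  unfolding holder_refine_def Rset_def by (simp add: Let_def)

lemma Rset_image: "Rset K m = mkbox K m ` (\<Pi>\<^sub>E i\<in>{..<length K}. {..<m i})"
proof (intro set_eqI iffI)
  fix K' assume K': "K' \<in> Rset K m"
  then have len: "length K' = length K" and ex: "\<forall>i<length K. \<exists>k<m i. K' ! i = piece (K ! i) (m i) k"
    unfolding Rset_def by blast+
  define ks where "ks = restrict (\<lambda>i. SOME k. k < m i \<and> K' ! i = piece (K ! i) (m i) k) {..<length K}"
  have ks: "ks i < m i \<and> K' ! i = piece (K ! i) (m i) (ks i)" if "i < length K" for i
  proof -
    have "ks i = (SOME k. k < m i \<and> K' ! i = piece (K ! i) (m i) k)" using that by (simp add: ks_def)
    then show ?thesis using someI_ex[OF ex[rule_format, OF that]] by simp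
  qed
  have "ks \<in> (\<Pi>\<^sub>E i\<in>{..<length K}. {..<m i})"
    unfolding PiE_iff using ks by (simp add: ks_def)
  moreover have "K' = mkbox K m ks"
  proof (rule nth_equalityI)
    show "length K' = length (mkbox K m ks)" using len by (simp add: mkbox_def)
    fix i assume "i < length K'"
    then show "K' ! i = mkbox K m ks ! i" using ks len by (simp add: mkbox_def)
  qed
  ultimately show "K' \<in> mkbox K m ` (\<Pi>\<^sub>E i\<in>{..<length K}. {..<m i})" by blast
next
  fix K' assume "K' \<in> mkbox K m ` (\<Pi>\<^sub>E i\<in>{..<length K}. {..<m i})"
  then obtain ks where ks: "ks \<in> (\<Pi>\<^sub>E i\<in>{..<length K}. {..<m i})" and K': "K' = mkbox K m ks" by blast
  have "\<forall>i<length K. \<exists>k<m i. K' ! i = piece (K ! i) (m i) k"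
  proof (intro allI impI)
    fix i assume i: "i < length K"
    then have "ks i < m i" using ks by (auto simp: PiE_iff)
    moreover have "K' ! i = piece (K ! i) (m i) (ks i)" using i by (simp add: K' mkbox_def)
    ultimately show "\<exists>k<m i. K' ! i = piece (K ! i) (m i) k" by blast
  qed
  moreover have "length K' = length K" by (simp add: K' mkbox_def)
  ultimately show "K' \<in> Rset K m" unfolding Rset_def by blast
qed

lemma Rset_finite: "finite (Rset K m)"
  unfolding Rset_image by (intro finite_imageI finite_PiE) auto

lemma Rset_nth:
  assumes "K' \<in> Rset K m" "j < length K"
  obtains k where "k < m j" "K' ! j = piece (K ! j) (m j) k"
  using assms unfolding Rset_def by blast

lemma Rset_comp:
  assumes "K' \<in> Rset K m" "j < length K"
  shows "set_of (K' ! j) \<subseteq> set_of (K ! j)"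
  by (rule Rset_nth[OF assms]) (simp add: piece_sub)

lemma Rset_width:
  assumes "K' \<in> Rset K m" "j < length K"
  shows "width (K' ! j) = width (K ! j) / real (m j)"
  by (rule Rset_nth[OF assms]) (simp add: width_piece)

lemma Rset_pos:
  assumes "K' \<in> Rset K m" "j < length K" "0 < width (K ! j)" "0 < m j"
  shows "lower (K' ! j) < upper (K' ! j)"
  by (rule Rset_nth[OF assms(1,2)]) (simp add: piece_pos assms)

lemma set_box_mono_comp:
  assumes "length K' = length K" "\<And>j. j < length K \<Longrightarrow> set_of (K' ! j) \<subseteq> set_of (K ! j)"
  shows "set_box K' \<subseteq> set_box K"
  using assms unfolding set_box_def by (auto simp: PiE_iff)

lemma Rset_sub:
  assumes K': "K' \<in> Rset K m"
  shows "set_box K' \<subseteq> set_box K"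
proof (rule set_box_mono_comp)
  show "length K' = length K" using K' by (simp add: Rset_def)
  fix j assume "j < length K"
  then show "set_of (K' ! j) \<subseteq> set_of (K ! j)" by (rule Rset_comp[OF K'])
qed

lemma Rset_cover:
  assumes m: "\<And>i. i < length K \<Longrightarrow> 0 < m i"
  shows "(\<Union>K'\<in>Rset K m. set_box K') = set_box K"
proof
  show "(\<Union>K'\<in>Rset K m. set_box K') \<subseteq> set_box K" using Rset_sub by blast
next
  show "set_box K \<subseteq> (\<Union>K'\<in>Rset K m. set_box K')"
  proof
    fix x assume x: "x \<in> set_box K"
    have ex: "\<forall>i<length K. \<exists>k<m i. x i \<in> set_of (piece (K ! i) (m i) k)"
      using piece_cover[OF set_box_comp[OF x] m] by blast
    define ks where "ks = (\<lambda>i. SOME k. k < m i \<and> x i \<in> set_of (piece (K ! i) (m i) k))"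
    have ks: "ks i < m i \<and> x i \<in> set_of (piece (K ! i) (m i) (ks i))" if "i < length K" for i
      using someI_ex[OF ex[rule_format, OF that]] by (simp add: ks_def)
    have "mkbox K m ks \<in> Rset K m" using ks by (auto simp: Rset_def mkbox_def)
    moreover have "x \<in> set_box (mkbox K m ks)"
      using x ks by (auto simp: set_box_def mkbox_def PiE_iff)
    ultimately show "x \<in> (\<Union>K'\<in>Rset K m. set_box K')" by blast
  qed
qed

lemma Rset_sep:
  assumes "K1 \<in> Rset K m" "K2 \<in> Rset K m" "K1 \<noteq> K2"
  shows "\<exists>j<length K. upper (K1 ! j) \<le> lower (K2 ! j) \<or> upper (K2 ! j) \<le> lower (K1 ! j)"
proof -
  have len: "length K1 = length K" "length K2 = length K" using assms by (auto simp: Rset_def)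
  have "\<exists>j<length K. K1 ! j \<noteq> K2 ! j"
  proof (rule ccontr)
    assume "\<not> ?thesis"
    then have "K1 = K2" using len by (intro nth_equalityI) auto
    then show False using assms(3) by simp
  qed
  then obtain j where j: "j < length K" "K1 ! j \<noteq> K2 ! j" by blast
  obtain k1 where k1: "K1 ! j = piece (K ! j) (m j) k1" by (rule Rset_nth[OF assms(1) j(1)])
  obtain k2 where k2: "K2 ! j = piece (K ! j) (m j) k2" by (rule Rset_nth[OF assms(2) j(1)])
  have "k1 \<noteq> k2" using j k1 k2 by auto
  then have "upper (K1 ! j) \<le> lower (K2 ! j) \<or> upper (K2 ! j) \<le> lower (K1 ! j)"
    unfolding k1 k2 using piece_sep[of k1 k2 "K ! j" "m j"] piece_sep[of k2 k1 "K ! j" "m j"]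
    by (auto simp: linorder_neq_iff)
  then show ?thesis using j by blast
qed

lemma Rset_vol:
  assumes m: "\<And>i. i < length K \<Longrightarrow> 0 < m i"
  shows "(\<Sum>K'\<in>Rset K m. vol K') \<le> vol K"
proof -
  let ?A = "\<Pi>\<^sub>E i\<in>{..<length K}. {..<m i}"
  have "(\<Sum>K'\<in>Rset K m. vol K') \<le> (\<Sum>ks\<in>?A. vol (mkbox K m ks))"
    unfolding Rset_image using sum_image_le[of ?A vol "mkbox K m"] by (auto intro: finite_PiE vol_nonneg)
  also have "\<dots> = (\<Sum>ks\<in>?A. \<Prod>i<length K. width (K ! i) / real (m i))"
    by (intro sum.cong refl) (simp add: vol_def mkbox_def width_piece)
  also have "\<dots> = (\<Prod>i<length K. \<Sum>k<m i. width (K ! i) / real (m i))"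
    by (rule prod_sum_PiE[symmetric]) auto
  also have "\<dots> = vol K"
    unfolding vol_def using m by (intro prod.cong refl) simp
  finally show ?thesis .
qed

lemma sum_UN_le_nonneg:
  fixes f :: "'a \<Rightarrow> real"
  assumes "finite I" "\<And>i. i \<in> I \<Longrightarrow> finite (A i)" "\<And>x. 0 \<le> f x"
  shows "sum f (\<Union>i\<in>I. A i) \<le> (\<Sum>i\<in>I. sum f (A i))"
  using assms(1,2)
proof (induction I rule: finite_induct)
  case (insert a I)
  have fin: "finite (A a)" "finite (\<Union>i\<in>I. A i)" using insert by auto
  have "sum f (\<Union>i\<in>insert a I. A i) = sum f (A a \<union> (\<Union>i\<in>I. A i))" by simp
  also have "\<dots> = sum f (A a) + sum f (\<Union>i\<in>I. A i) - sum f (A a \<inter> (\<Union>i\<in>I. A i))"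
    using fin by (rule sum_Un)
  also have "\<dots> \<le> sum f (A a) + sum f (\<Union>i\<in>I. A i)"
    using assms(3) by (simp add: sum_nonneg)
  also have "\<dots> \<le> sum f (A a) + (\<Sum>i\<in>I. sum f (A i))" using insert by simp
  finally show ?case using insert by simp
qed simp

lemma sum_Un_le_nonneg:
  fixes f :: "'a \<Rightarrow> real"
  assumes "finite A" "finite B" "\<And>x. 0 \<le> f x"
  shows "sum f (A \<union> B) \<le> sum f A + sum f B"
  using sum_Un[OF assms(1,2), of f] assms(3) by (simp add: sum_nonneg)

lemma dorfler_props:
  fixes \<eta> :: "box \<Rightarrow> real"
  assumes fin: "finite P" and nn: "\<And>K. 0 \<le> \<eta> K" and th: "\<theta> \<le> 1"
  shows "dorfler \<theta> \<eta> P \<subseteq> P" "\<theta> * sum \<eta> P \<le> sum \<eta> (dorfler \<theta> \<eta> P)"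
proof -
  define it where "it k = (dorfler_step \<eta> P ^^ k) {}" for k
  have itS: "it (Suc k) = dorfler_step \<eta> P (it k)" for k by (simp add: it_def)
  have sub: "it k \<subseteq> P" for k
    by (induction k) (auto simp: it_def dorfler_step_def)
  have grow: "min k (card P) \<le> card (it k)" for k
  proof (induction k)
    case (Suc k)
    show ?case
    proof (cases "it k = P")
      case True
      then have "it (Suc k) = P" unfolding itS dorfler_step_def by auto
      then show ?thesis by simp
    next
      case False
      then have ne: "P - it k \<noteq> {}" using sub[of k] by blast
      have finD: "finite (P - it k)" using fin by simp
      have "Max (\<eta> ` (P - it k)) \<in> \<eta> ` (P - it k)" using ne finD by (intro Max_in) auto
      then obtain K where K: "K \<in> P - it k" "\<eta> K = Max (\<eta> ` (P - it k))" by auto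
      have "K \<in> it (Suc k)" "K \<notin> it k" using K unfolding itS dorfler_step_def by auto
      moreover have "it k \<subseteq> it (Suc k)" unfolding itS dorfler_step_def by auto
      ultimately have "it k \<subset> it (Suc k)" by blast
      then have "card (it k) < card (it (Suc k))"
        using sub[of "Suc k"] fin by (intro psubset_card_mono) (auto intro: finite_subset)
      then show ?thesis using Suc by linarith
    qed
  qed simp
  have "card (it (card P)) \<ge> card P" using grow[of "card P"] by simp
  moreover have "card (it (card P)) \<le> card P" using card_mono[OF fin sub[of "card P"]] .
  ultimately have full: "it (card P) = P" using sub[of "card P"] fin by (intro card_subset_eq) auto
  have ex: "\<exists>k. \<theta> * sum \<eta> P \<le> sum \<eta> (it k)"
  proof (intro exI)
    have "0 \<le> sum \<eta> P" using nn by (simp add: sum_nonneg)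
    then show "\<theta> * sum \<eta> P \<le> sum \<eta> (it (card P))" unfolding full
      using mult_nonneg_nonneg[of "1 - \<theta>" "sum \<eta> P"] th by (simp add: algebra_simps)
  qed
  have d: "dorfler \<theta> \<eta> P = it (LEAST k. \<theta> * sum \<eta> P \<le> sum \<eta> (it k))"
    unfolding dorfler_def it_def ..
  show "dorfler \<theta> \<eta> P \<subseteq> P" unfolding d by (rule sub)
  show "\<theta> * sum \<eta> P \<le> sum \<eta> (dorfler \<theta> \<eta> P)" unfolding d by (rule LeastI_ex[OF ex])
qed

lemma eta_nonneg: "0 \<le> eta F K"
  unfolding eta_def by (simp add: width_nonneg vol_nonneg)

definition posbox :: "nat \<Rightarrow> box \<Rightarrow> bool" where
  "posbox dm K \<longleftrightarrow> length K = dm \<and> (\<forall>j<dm. lower (K ! j) < upper (K ! j))"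

lemma posbox_vol: "posbox dm K \<Longrightarrow> 0 < vol K"
proof -
  assume "posbox dm K"
  then have "\<And>j. j \<in> {..<length K} \<Longrightarrow> 0 < width (K ! j)" by (auto simp: posbox_def width_def)
  then show ?thesis unfolding vol_def by (rule prod_pos)
qed

lemma refine_cases:
  assumes pb: "posbox dm K" and C: "C > 0" and rho: "\<rho> > 0" and e: "0 \<le> e"
  obtains "e = 0" "holder_refine C \<gamma> \<rho> e K = {K}"
  | m where "e \<noteq> 0" "holder_refine C \<gamma> \<rho> e K = Rset K m" "\<And>i. i < dm \<Longrightarrow> 0 < m i"
    "m = (\<lambda>i. nat \<lceil>width (K ! i) * (C * vol K / (\<rho> * e)) powr (1 / \<gamma>)\<rceil>)"
proof (cases "e = 0")
  case True
  then show ?thesis using that(1) by (simp add: holder_refine_def)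
next
  case False
  then have e0: "0 < e" using e by simp
  let ?s = "(C * vol K / (\<rho> * e)) powr (1 / \<gamma>)"
  have s: "0 < ?s" using posbox_vol[OF pb] C rho e0 by simp
  have "0 < nat \<lceil>width (K ! i) * ?s\<rceil>" if "i < dm" for i
  proof -
    have "0 < width (K ! i)" using pb that by (simp add: posbox_def width_def)
    then have "0 < width (K ! i) * ?s" using s by simp
    then show ?thesis by simp
  qed
  then show ?thesis using that(2)[OF False holder_refine_Rset[OF False]] by blast
qed

lemma refine_props:
  fixes \<gamma> :: real
  assumes pb: "posbox dm K" and C: "C > 0" and rho: "\<rho> > 0" and e: "0 \<le> e"
  shows "finite (holder_refine C \<gamma> \<rho> e K)" "\<And>K'. K' \<in> (holder_refine C \<gamma> \<rho> e K) \<Longrightarrow> posbox dm K' \<and> (\<forall>j<dm. set_of (K' ! j) \<subseteq> set_of (K ! j))"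
    "\<And>K1 K2. K1 \<in> (holder_refine C \<gamma> \<rho> e K) \<Longrightarrow> K2 \<in> (holder_refine C \<gamma> \<rho> e K) \<Longrightarrow> K1 \<noteq> K2 \<Longrightarrow>
       \<exists>j<dm. upper (K1 ! j) \<le> lower (K2 ! j) \<or> upper (K2 ! j) \<le> lower (K1 ! j)"
    "(\<Union>K'\<in>(holder_refine C \<gamma> \<rho> e K). set_box K') = set_box K"
proof -
  have len: "length K = dm" using pb by (simp add: posbox_def)
  have "finite (holder_refine C \<gamma> \<rho> e K) \<and> (\<forall>K'\<in>(holder_refine C \<gamma> \<rho> e K). posbox dm K' \<and> (\<forall>j<dm. set_of (K' ! j) \<subseteq> set_of (K ! j))) \<and>
    (\<forall>K1\<in>(holder_refine C \<gamma> \<rho> e K). \<forall>K2\<in>(holder_refine C \<gamma> \<rho> e K). K1 \<noteq> K2 \<longrightarrow>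
       (\<exists>j<dm. upper (K1 ! j) \<le> lower (K2 ! j) \<or> upper (K2 ! j) \<le> lower (K1 ! j))) \<and>
    (\<Union>K'\<in>(holder_refine C \<gamma> \<rho> e K). set_box K') = set_box K"
  proof (rule refine_cases[OF pb C rho e, of \<gamma>])
    assume "holder_refine C \<gamma> \<rho> e K = {K}"
    then show ?thesis using pb by auto
  next
    fix m assume R: "holder_refine C \<gamma> \<rho> e K = Rset K m" and m: "\<And>i. i < dm \<Longrightarrow> 0 < m i"
    have pos: "posbox dm K'" if "K' \<in> Rset K m" for K'
    proof -
      have "length K' = dm" using that len by (simp add: Rset_def)
      moreover have "lower (K' ! j) < upper (K' ! j)" if "j < dm" for j
        using Rset_pos[OF \<open>K' \<in> Rset K m\<close>, of j] that len m pb by (auto simp: posbox_def width_def)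
      ultimately show ?thesis by (simp add: posbox_def)
    qed
    have f1: "finite (Rset K m)" by (rule Rset_finite)
    have f2: "\<forall>K'\<in>Rset K m. posbox dm K' \<and> (\<forall>j<dm. set_of (K' ! j) \<subseteq> set_of (K ! j))"
      using pos Rset_comp[of _ K m] len by blast
    have f3: "\<forall>K1\<in>Rset K m. \<forall>K2\<in>Rset K m. K1 \<noteq> K2 \<longrightarrow>
       (\<exists>j<dm. upper (K1 ! j) \<le> lower (K2 ! j) \<or> upper (K2 ! j) \<le> lower (K1 ! j))"
      using Rset_sep[of _ K m] len by blast
    have f4: "(\<Union>K'\<in>Rset K m. set_box K') = set_box K"
      by (rule Rset_cover) (use m len in auto)
    show ?thesis unfolding R using f1 f2 f3 f4 by blast
  qed
  note all = this
  show "finite (holder_refine C \<gamma> \<rho> e K)" using all by (rule conjunct1)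
  show "\<And>K'. K' \<in> (holder_refine C \<gamma> \<rho> e K) \<Longrightarrow> posbox dm K' \<and> (\<forall>j<dm. set_of (K' ! j) \<subseteq> set_of (K ! j))"
    using all[THEN conjunct2, THEN conjunct1] by blast
  show "\<And>K1 K2. K1 \<in> (holder_refine C \<gamma> \<rho> e K) \<Longrightarrow> K2 \<in> (holder_refine C \<gamma> \<rho> e K) \<Longrightarrow> K1 \<noteq> K2 \<Longrightarrow>
       \<exists>j<dm. upper (K1 ! j) \<le> lower (K2 ! j) \<or> upper (K2 ! j) \<le> lower (K1 ! j)"
    using all[THEN conjunct2, THEN conjunct2, THEN conjunct1] by blast
  show "(\<Union>K'\<in>(holder_refine C \<gamma> \<rho> e K). set_box K') = set_box K"
    using all[THEN conjunct2, THEN conjunct2, THEN conjunct2] .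
qed

lemma refine_eta:
  assumes pb: "posbox dm K" and sub: "set_box K \<subseteq> set_box \<Omega>"
    and hold: "box_holder dm \<Omega> F C \<gamma>" and C: "C > 0" and g: "\<gamma> > 0" and rho: "\<rho> > 0"
  shows "sum (eta F) (holder_refine C \<gamma> \<rho> (eta F K) K) \<le> \<rho> * eta F K"
proof (rule refine_cases[OF pb C rho eta_nonneg[of F K], where \<gamma>=\<gamma>])
  assume "eta F K = 0" "holder_refine C \<gamma> \<rho> (eta F K) K = {K}"
  then show ?thesis by simp
next
  fix m assume e0: "eta F K \<noteq> 0" and R: "holder_refine C \<gamma> \<rho> (eta F K) K = Rset K m"
    and m: "\<And>i. i < dm \<Longrightarrow> 0 < m i"
    and mdef: "m = (\<lambda>i. nat \<lceil>width (K ! i) * (C * vol K / (\<rho> * eta F K)) powr (1 / \<gamma>)\<rceil>)"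
  define e where "e = eta F K"
  define v where "v = vol K"
  have e: "0 < e" using e0 eta_nonneg[of F K] by (simp add: e_def)
  have v: "0 < v" using posbox_vol[OF pb] by (simp add: v_def)
  have len: "length K = dm" using pb by (simp add: posbox_def)
  define s where "s = (C * v / (\<rho> * e)) powr (1 / \<gamma>)"
  define t where "t = (\<rho> * e / (C * v)) powr (1 / \<gamma>)"
  have s: "0 < s" using C v rho e by (simp add: s_def)
  have t: "0 < t" using C v rho e by (simp add: t_def)
  have "s * t = (C * v / (\<rho> * e) * (\<rho> * e / (C * v))) powr (1 / \<gamma>)"
    unfolding s_def t_def by (rule powr_mult[symmetric])
  also have "C * v / (\<rho> * e) * (\<rho> * e / (C * v)) = 1" using C v rho e by (simp add: field_simps)
  finally have st: "s * t = 1" by simp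
  have tg: "t powr \<gamma> = \<rho> * e / (C * v)"
    using g C v rho e by (simp add: t_def powr_powr)
  have bw: "box_width K' \<le> t" if K': "K' \<in> Rset K m" for K'
  proof -
    have lenK': "length K' = dm" using K' len by (simp add: Rset_def)
    have "width X \<le> t" if X: "X \<in> set K'" for X
    proof -
      obtain i where i: "i < dm" "X = K' ! i" using X lenK' by (auto simp: in_set_conv_nth)
      have wi: "0 < width (K ! i)" using pb i by (simp add: posbox_def width_def)
      have "width (K ! i) * s \<le> real (m i)" unfolding mdef s_def e_def v_def by linarith
      then have "width (K ! i) / real (m i) \<le> width (K ! i) / (width (K ! i) * s)"
        using wi s m[OF i(1)] by (intro divide_left_mono) auto
      also have "\<dots> = t" using wi s st by (simp add: field_simps)
      finally show ?thesis using Rset_width[OF K', of i] i len by simp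
    qed
    then show ?thesis unfolding box_width_def using t by (intro Max.boundedI) auto
  qed
  have etaK': "eta F K' \<le> \<rho> * e / v * vol K'" if K': "K' \<in> Rset K m" for K'
  proof -
    have "subbox dm \<Omega> K'" using Rset_sub[OF K'] sub K' len by (auto simp: subbox_def Rset_def)
    then have "width (F K') \<le> C * box_width K' powr \<gamma>" using hold by (simp add: box_holder_def)
    also have "\<dots> \<le> C * t powr \<gamma>" using bw[OF K'] C g box_width_nonneg
      by (intro mult_left_mono powr_mono2) auto
    also have "\<dots> = \<rho> * e / v" unfolding tg using C by simp
    finally show ?thesis unfolding eta_def using vol_nonneg by (intro mult_right_mono) auto
  qed
  have "sum (eta F) (Rset K m) \<le> (\<Sum>K'\<in>Rset K m. \<rho> * e / v * vol K')"
    by (rule sum_mono) (rule etaK')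
  also have "\<dots> = \<rho> * e / v * (\<Sum>K'\<in>Rset K m. vol K')" by (simp add: sum_distrib_left)
  also have "\<dots> \<le> \<rho> * e / v * v"
    using Rset_vol[of K m] m len rho e v by (intro mult_left_mono) (auto simp: v_def)
  also have "\<dots> = \<rho> * e" using v by simp
  finally show ?thesis unfolding R e_def .
qed

definition partinv :: "nat \<Rightarrow> box \<Rightarrow> box set \<Rightarrow> bool" where
  "partinv dm \<Omega> P \<longleftrightarrow> finite P \<and> (\<forall>K\<in>P. posbox dm K \<and> set_box K \<subseteq> set_box \<Omega>) \<and>
     (\<forall>K1\<in>P. \<forall>K2\<in>P. K1 \<noteq> K2 \<longrightarrow>
        (\<exists>j<dm. upper (K1 ! j) \<le> lower (K2 ! j) \<or> upper (K2 ! j) \<le> lower (K1 ! j))) \<and>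
     (\<Union>K\<in>P. set_box K) = set_box \<Omega>"

lemma lower_mono_subset: "set_of X \<subseteq> set_of Y \<Longrightarrow> lower Y \<le> lower (X::real interval)"
  by (metis atLeastAtMost_iff lower_le_upper order_refl set_of_eq subsetD)

lemma sep_inherit:
  fixes X Y K1 K2 :: box
  assumes "upper (K1 ! j) \<le> lower (K2 ! j) \<or> upper (K2 ! j) \<le> lower (K1 ! j)"
    "set_of (X ! j) \<subseteq> set_of (K1 ! j)" "set_of (Y ! j) \<subseteq> set_of (K2 ! j)"
  shows "upper (X ! j) \<le> lower (Y ! j) \<or> upper (Y ! j) \<le> lower (X ! j)"
  using assms upper_mono_subset[OF assms(2)] upper_mono_subset[OF assms(3)]
    lower_mono_subset[OF assms(2)] lower_mono_subset[OF assms(3)] by linarith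

lemma partinv_step:
  fixes \<gamma> :: real and e :: "box \<Rightarrow> real"
  assumes inv: "partinv dm \<Omega> P" and MP: "M \<subseteq> P" and C: "C > 0" and rho: "\<rho> > 0"
    and e: "\<And>K. 0 \<le> e K"
  shows "partinv dm \<Omega> ((P - M) \<union> (\<Union>K\<in>M. holder_refine C \<gamma> \<rho> (e K) K))"
proof -
  let ?R = "\<lambda>K. holder_refine C \<gamma> \<rho> (e K) K"
  let ?P' = "(P - M) \<union> (\<Union>K\<in>M. ?R K)"
  have finP: "finite P" and elP: "\<And>K. K \<in> P \<Longrightarrow> posbox dm K \<and> set_box K \<subseteq> set_box \<Omega>"
    and sepP: "\<And>K1 K2. K1 \<in> P \<Longrightarrow> K2 \<in> P \<Longrightarrow> K1 \<noteq> K2 \<Longrightarrow>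
        (\<exists>j<dm. upper (K1 ! j) \<le> lower (K2 ! j) \<or> upper (K2 ! j) \<le> lower (K1 ! j))"
    and unP: "(\<Union>K\<in>P. set_box K) = set_box \<Omega>"
  proof -
    note pi = inv[unfolded partinv_def]
    show "finite P" using pi by (rule conjunct1)
    show "\<And>K. K \<in> P \<Longrightarrow> posbox dm K \<and> set_box K \<subseteq> set_box \<Omega>"
      using pi[THEN conjunct2, THEN conjunct1] by blast
    show "\<And>K1 K2. K1 \<in> P \<Longrightarrow> K2 \<in> P \<Longrightarrow> K1 \<noteq> K2 \<Longrightarrow>
        (\<exists>j<dm. upper (K1 ! j) \<le> lower (K2 ! j) \<or> upper (K2 ! j) \<le> lower (K1 ! j))"
      using pi[THEN conjunct2, THEN conjunct2, THEN conjunct1] by blast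
    show "(\<Union>K\<in>P. set_box K) = set_box \<Omega>"
      using pi[THEN conjunct2, THEN conjunct2, THEN conjunct2] .
  qed
  have pbM: "posbox dm K" if "K \<in> M" for K using elP MP that by blast
  have rp1: "finite (?R K)" if "K \<in> M" for K
    using refine_props(1)[OF pbM[OF that] C rho e[of K], where \<gamma>=\<gamma>] .
  have rp2: "posbox dm X \<and> (\<forall>j<dm. set_of (X ! j) \<subseteq> set_of (K ! j))" if "K \<in> M" "X \<in> ?R K" for K X
    using refine_props(2)[OF pbM[OF that(1)] C rho e[of K], where \<gamma>=\<gamma>] that(2) by blast
  have rp3: "\<exists>j<dm. upper (X ! j) \<le> lower (Y ! j) \<or> upper (Y ! j) \<le> lower (X ! j)"
    if "K \<in> M" "X \<in> ?R K" "Y \<in> ?R K" "X \<noteq> Y" for K X Y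
    using refine_props(3)[OF pbM[OF that(1)] C rho e[of K], where \<gamma>=\<gamma>] that(2-4) by blast
  have rp4: "(\<Union>X\<in>?R K. set_box X) = set_box K" if "K \<in> M" for K
    using refine_props(4)[OF pbM[OF that] C rho e[of K], where \<gamma>=\<gamma>] .
  have fin: "finite ?P'" using finP MP rp1 by (auto intro: finite_subset)
  have compsub: "\<And>j. j < dm \<Longrightarrow> set_of (X ! j) \<subseteq> set_of (K ! j)" if "K \<in> M" "X \<in> ?R K" for K X
    using rp2[OF that] by blast
  have el: "posbox dm X \<and> set_box X \<subseteq> set_box \<Omega>" if X: "X \<in> ?P'" for X
  proof (cases "X \<in> P - M")
    case True then show ?thesis using elP by blast
  next
    case False
    then obtain K where K: "K \<in> M" "X \<in> ?R K" using X by blast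
    have pX: "posbox dm X" using rp2[OF K] by blast
    have "set_box X \<subseteq> set_box K"
      using pX pbM[OF K(1)] compsub[OF K] by (intro set_box_mono_comp) (auto simp: posbox_def)
    then show ?thesis using pX elP[of K] K MP by blast
  qed
  have sep: "\<exists>j<dm. upper (X ! j) \<le> lower (Y ! j) \<or> upper (Y ! j) \<le> lower (X ! j)"
    if X: "X \<in> ?P'" and Y: "Y \<in> ?P'" and XY: "X \<noteq> Y" for X Y
  proof -
    have parent: "\<exists>K\<in>P. (\<forall>j<dm. set_of (Z ! j) \<subseteq> set_of (K ! j)) \<and>
        ((Z \<in> P - M \<and> Z = K) \<or> (K \<in> M \<and> Z \<in> ?R K))" if Z: "Z \<in> ?P'" for Z
    proof (cases "Z \<in> P - M")
      case True then show ?thesis by blast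
    next
      case False
      then obtain K where K: "K \<in> M" "Z \<in> ?R K" using Z by blast
      then show ?thesis using compsub[OF K] MP by blast
    qed
    obtain KX where KX: "KX \<in> P" "\<forall>j<dm. set_of (X ! j) \<subseteq> set_of (KX ! j)"
      "(X \<in> P - M \<and> X = KX) \<or> (KX \<in> M \<and> X \<in> ?R KX)" using parent[OF X] by blast
    obtain KY where KY: "KY \<in> P" "\<forall>j<dm. set_of (Y ! j) \<subseteq> set_of (KY ! j)"
      "(Y \<in> P - M \<and> Y = KY) \<or> (KY \<in> M \<and> Y \<in> ?R KY)" using parent[OF Y] by blast
    show ?thesis
    proof (cases "KX = KY")
      case True
      then have "KX \<in> M" "X \<in> ?R KX" "Y \<in> ?R KX" using KX(3) KY(3) XY by auto
      then show ?thesis using rp3 XY by blast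
    next
      case False
      then obtain j where j: "j < dm" "upper (KX ! j) \<le> lower (KY ! j) \<or> upper (KY ! j) \<le> lower (KX ! j)"
        using sepP[OF KX(1) KY(1)] by blast
      then show ?thesis using sep_inherit[OF j(2)] KX(2) KY(2) by blast
    qed
  qed
  have un: "(\<Union>K\<in>?P'. set_box K) = set_box \<Omega>"
  proof -
    have "(\<Union>K\<in>?P'. set_box K) = (\<Union>K\<in>P - M. set_box K) \<union> (\<Union>K\<in>M. \<Union>X\<in>?R K. set_box X)" by blast
    also have "(\<Union>K\<in>M. \<Union>X\<in>?R K. set_box X) = (\<Union>K\<in>M. set_box K)" using rp4 by simp
    also have "(\<Union>K\<in>P - M. set_box K) \<union> (\<Union>K\<in>M. set_box K) = (\<Union>K\<in>P. set_box K)" using MP by blast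
    finally show ?thesis using unP by simp
  qed
  show ?thesis unfolding partinv_def
    apply (intro conjI)
    subgoal by (rule fin)
    subgoal using el by blast
    subgoal using sep by blast
    subgoal by (rule un)
    done
qed

lemma adaquad_P_Suc:
  "adaquad_P F \<theta> \<rho> C \<gamma> \<Omega> (Suc n) =
     (adaquad_P F \<theta> \<rho> C \<gamma> \<Omega> n - dorfler \<theta> (eta F) (adaquad_P F \<theta> \<rho> C \<gamma> \<Omega> n)) \<union>
     (\<Union>K\<in>dorfler \<theta> (eta F) (adaquad_P F \<theta> \<rho> C \<gamma> \<Omega> n). holder_refine C \<gamma> \<rho> (eta F K) K)"
  by (simp add: Let_def)

lemma adaquad_inv:
  assumes C: "C > 0" and rho: "\<rho> > 0" and th: "\<theta> \<le> 1"
    and Om: "length \<Omega> = dm" "\<forall>j<dm. lower (\<Omega> ! j) < upper (\<Omega> ! j)"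
  shows "partinv dm \<Omega> (adaquad_P F \<theta> \<rho> C \<gamma> \<Omega> n)"
proof (induction n)
  case 0
  show ?case using Om unfolding partinv_def posbox_def by simp
next
  case (Suc n)
  let ?P = "adaquad_P F \<theta> \<rho> C \<gamma> \<Omega> n"
  have "finite ?P" using Suc[unfolded partinv_def] by (rule conjunct1)
  then have "dorfler \<theta> (eta F) ?P \<subseteq> ?P"
    by (rule dorfler_props(1)[of ?P "eta F" \<theta>]) (use th in \<open>auto simp: eta_nonneg\<close>)
  then show ?case unfolding adaquad_P_Suc
    by (rule partinv_step[OF Suc _ C rho, of _ "eta F"]) (simp add: eta_nonneg)
qed

lemma adaquad_contract:
  assumes hold: "box_holder dm \<Omega> F C \<gamma>" and C: "C > 0" and g: "\<gamma> > 0"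
    and rho: "0 < \<rho>" "\<rho> < 1" and th: "0 < \<theta>" "\<theta> < 1"
    and Om: "length \<Omega> = dm" "\<forall>j<dm. lower (\<Omega> ! j) < upper (\<Omega> ! j)"
  shows "adaquad_eta F \<theta> \<rho> C \<gamma> \<Omega> (Suc n) \<le> (1 - \<theta> * (1 - \<rho>)) * adaquad_eta F \<theta> \<rho> C \<gamma> \<Omega> n"
proof -
  let ?P = "adaquad_P F \<theta> \<rho> C \<gamma> \<Omega> n"
  let ?M = "dorfler \<theta> (eta F) ?P"
  let ?R = "\<lambda>K. holder_refine C \<gamma> \<rho> (eta F K) K"
  have inv: "partinv dm \<Omega> ?P" using adaquad_inv[OF C rho(1) _ Om] th by simp
  note pi = inv[unfolded partinv_def]
  have finP: "finite ?P" using pi by (rule conjunct1)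
  have elP: "\<And>K. K \<in> ?P \<Longrightarrow> posbox dm K \<and> set_box K \<subseteq> set_box \<Omega>"
    using pi[THEN conjunct2, THEN conjunct1] by blast
  have MP: "?M \<subseteq> ?P" and Md: "\<theta> * sum (eta F) ?P \<le> sum (eta F) ?M"
    using dorfler_props[OF finP eta_nonneg] th by auto
  have finM: "finite ?M" using finP MP by (rule finite_subset[rotated])
  have pbM: "posbox dm K" if "K \<in> ?M" for K using elP MP that by blast
  have finR: "finite (?R K)" if "K \<in> ?M" for K
    using refine_props(1)[OF pbM[OF that] C rho(1) eta_nonneg] .
  have "adaquad_eta F \<theta> \<rho> C \<gamma> \<Omega> (Suc n) = sum (eta F) ((?P - ?M) \<union> (\<Union>K\<in>?M. ?R K))"
    unfolding adaquad_eta_def adaquad_P_Suc ..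
  also have "\<dots> \<le> sum (eta F) (?P - ?M) + sum (eta F) (\<Union>K\<in>?M. ?R K)"
    using finP finM finR by (intro sum_Un_le_nonneg eta_nonneg) auto
  also have "sum (eta F) (\<Union>K\<in>?M. ?R K) \<le> (\<Sum>K\<in>?M. sum (eta F) (?R K))"
    using finM finR by (intro sum_UN_le_nonneg eta_nonneg) auto
  also have "\<dots> \<le> (\<Sum>K\<in>?M. \<rho> * eta F K)"
  proof (rule sum_mono)
    fix K assume K: "K \<in> ?M"
    show "sum (eta F) (?R K) \<le> \<rho> * eta F K"
      by (rule refine_eta[OF pbM[OF K] _ hold C g rho(1)]) (use elP MP K in blast)
  qed
  also have "\<dots> = \<rho> * sum (eta F) ?M" by (simp add: sum_distrib_left)
  also have "sum (eta F) (?P - ?M) = sum (eta F) ?P - sum (eta F) ?M"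
    using finP MP by (simp add: sum_diff)
  finally have "adaquad_eta F \<theta> \<rho> C \<gamma> \<Omega> (Suc n) \<le> sum (eta F) ?P - (1 - \<rho>) * sum (eta F) ?M"
    by (simp add: algebra_simps)
  also have "\<dots> \<le> sum (eta F) ?P - (1 - \<rho>) * (\<theta> * sum (eta F) ?P)"
    using Md rho by (simp add: mult_left_mono)
  also have "\<dots> = (1 - \<theta> * (1 - \<rho>)) * adaquad_eta F \<theta> \<rho> C \<gamma> \<Omega> n"
    unfolding adaquad_eta_def by (simp add: algebra_simps)
  finally show ?thesis .
qed

lemma list_quad_bounds:
  fixes g :: "rvec \<Rightarrow> real"
  assumes "\<And>w x. (w, x) \<in> set xs \<Longrightarrow> 0 < w \<and> lo \<le> g x \<and> g x \<le> hi"
  shows "lo * (\<Sum>(w, x)\<leftarrow>xs. w) \<le> (\<Sum>(w, x)\<leftarrow>xs. w * g x) \<and>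
         (\<Sum>(w, x)\<leftarrow>xs. w * g x) \<le> hi * (\<Sum>(w, x)\<leftarrow>xs. w)"
  using assms
proof (induction xs)
  case (Cons a xs)
  obtain w x where a: "a = (w, x)" by (cases a)
  have h: "0 < w" "lo \<le> g x" "g x \<le> hi" using Cons.prems[of w x] a by auto
  have m: "w * lo \<le> w * g x" "w * g x \<le> w * hi" using h by (auto intro: mult_left_mono)
  have ih: "lo * (\<Sum>(w, x)\<leftarrow>xs. w) \<le> (\<Sum>(w, x)\<leftarrow>xs. w * g x) \<and>
         (\<Sum>(w, x)\<leftarrow>xs. w * g x) \<le> hi * (\<Sum>(w, x)\<leftarrow>xs. w)"
    by (rule Cons.IH) (use Cons.prems in auto)
  have e1: "(\<Sum>(w, x)\<leftarrow>a # xs. w) = w + (\<Sum>(w, x)\<leftarrow>xs. w)" by (simp add: a)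
  have e2: "(\<Sum>(w, x)\<leftarrow>a # xs. w * g x) = w * g x + (\<Sum>(w, x)\<leftarrow>xs. w * g x)" by (simp add: a)
  show ?case unfolding e1 e2 using ih m by (simp add: distrib_left mult.commute)
qed simp

lemma quad_bounds:
  assumes "valid_quad_rule dm rule" "length K = dm"
    and "\<And>x. x \<in> set_box K \<Longrightarrow> lo \<le> g x \<and> g x \<le> hi"
  shows "vol K * lo \<le> quad rule g K \<and> quad rule g K \<le> vol K * hi"
proof -
  have r: "\<forall>(w, x) \<in> set (rule K). w > 0 \<and> x \<in> set_box K" "(\<Sum>(w, x)\<leftarrow>rule K. w) = vol K"
    using assms(1,2) unfolding valid_quad_rule_def by blast+
  have "lo * (\<Sum>(w, x)\<leftarrow>rule K. w) \<le> (\<Sum>(w, x)\<leftarrow>rule K. w * g x) \<and>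
         (\<Sum>(w, x)\<leftarrow>rule K. w * g x) \<le> hi * (\<Sum>(w, x)\<leftarrow>rule K. w)"
    by (rule list_quad_bounds) (use r(1) assms(3) in fastforce)
  then show ?thesis unfolding quad_def r(2) by (simp add: mult.commute)
qed

lemma interval_diff:
  assumes "lo \<le> a" "a \<le> hi" "lo \<le> b" "b \<le> (hi::real)"
  shows "\<bar>a - b\<bar> \<le> hi - lo"
  using assms by linarith

context
  fixes \<sigma> :: "real \<Rightarrow> real" and \<Sigma> :: "real interval \<Rightarrow> real interval"
    and W :: "nat \<Rightarrow> nat \<Rightarrow> nat \<Rightarrow> real" and b :: "nat \<Rightarrow> nat \<Rightarrow> real"
    and d :: "nat \<Rightarrow> nat" and L :: nat and p :: real
  assumes cont: "continuous_on UNIV \<sigma>" and encl: "real_enclosure \<sigma> \<Sigma>" and p: "1 \<le> p"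
begin


lemma ff_in: "length K = d 0 \<Longrightarrow> x \<in> set_box K \<Longrightarrow> (f_Phi \<sigma> W b d L p) x \<in> set_of ((F_Phi \<Sigma> W b d L p) K)"
  by (rule f_in_F[OF encl]) (use p set_box_comp in auto)

lemma ff_nonneg: "0 \<le> (f_Phi \<sigma> W b d L p) x"
  unfolding f_Phi_def by (simp add: sum_nonneg)

lemma fin_box: "length K = d 0 \<Longrightarrow> emeasure (lebesgue_d (d 0)) (set_box K) < \<infinity>"
  using emeasure_set_box[of K "d 0"] by simp

lemma ff_integrable:
  assumes K: "length K = d 0"
  shows "set_integrable (lebesgue_d (d 0)) (set_box K) (f_Phi \<sigma> W b d L p)"
proof (rule set_integrable_bounded[where B="\<bar>lower ((F_Phi \<Sigma> W b d L p) K)\<bar> + \<bar>upper ((F_Phi \<Sigma> W b d L p) K)\<bar>"])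
  show "set_box K \<in> sets (lebesgue_d (d 0))" using K by (rule set_box_sets)
  show "emeasure (lebesgue_d (d 0)) (set_box K) < \<infinity>" using K by (rule fin_box)
  show "(f_Phi \<sigma> W b d L p) \<in> borel_measurable (lebesgue_d (d 0))" by (rule f_meas[OF cont])
  fix x assume "x \<in> set_box K"
  then have h: "lower ((F_Phi \<Sigma> W b d L p) K) \<le> (f_Phi \<sigma> W b d L p) x" "(f_Phi \<sigma> W b d L p) x \<le> upper ((F_Phi \<Sigma> W b d L p) K)"
    using ff_in[OF K] by (auto simp: set_of_eq)
  then show "\<bar>(f_Phi \<sigma> W b d L p) x\<bar> \<le> \<bar>lower ((F_Phi \<Sigma> W b d L p) K)\<bar> + \<bar>upper ((F_Phi \<Sigma> W b d L p) K)\<bar>" by linarith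
qed

lemma const_integrable:
  assumes K: "length K = d 0"
  shows "set_integrable (lebesgue_d (d 0)) (set_box K) (\<lambda>_. c::real)"
proof (rule set_integrable_bounded[where B="\<bar>c\<bar>"])
  show "set_box K \<in> sets (lebesgue_d (d 0))" using K by (rule set_box_sets)
  show "emeasure (lebesgue_d (d 0)) (set_box K) < \<infinity>" using K by (rule fin_box)
qed auto

lemma int_bounds:
  assumes K: "length K = d 0"
  shows "vol K * lower ((F_Phi \<Sigma> W b d L p) K) \<le> (LINT x:set_box K|(lebesgue_d (d 0)). (f_Phi \<sigma> W b d L p) x) \<and> (LINT x:set_box K|(lebesgue_d (d 0)). (f_Phi \<sigma> W b d L p) x) \<le> vol K * upper ((F_Phi \<Sigma> W b d L p) K)"
proof -
  have c: "(LINT x:set_box K|(lebesgue_d (d 0)). c) = vol K * c" for c :: real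
    using set_integral_const[OF set_box_sets[OF K], of c] emeasure_set_box[OF K] measure_set_box[OF K]
    by simp
  have "(LINT x:set_box K|(lebesgue_d (d 0)). lower ((F_Phi \<Sigma> W b d L p) K)) \<le> (LINT x:set_box K|(lebesgue_d (d 0)). (f_Phi \<sigma> W b d L p) x)"
    by (rule set_integral_mono[OF const_integrable[OF K] ff_integrable[OF K]])
       (use ff_in[OF K] in \<open>auto simp: set_of_eq\<close>)
  moreover have "(LINT x:set_box K|(lebesgue_d (d 0)). (f_Phi \<sigma> W b d L p) x) \<le> (LINT x:set_box K|(lebesgue_d (d 0)). upper ((F_Phi \<Sigma> W b d L p) K))"
    by (rule set_integral_mono[OF ff_integrable[OF K] const_integrable[OF K]])
       (use ff_in[OF K] in \<open>auto simp: set_of_eq\<close>)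
  ultimately show ?thesis unfolding c by simp
qed

lemma local_err:
  assumes K: "length K = d 0" and rule: "valid_quad_rule (d 0) rule"
  shows "\<bar>(LINT x:set_box K|(lebesgue_d (d 0)). (f_Phi \<sigma> W b d L p) x) - quad rule (f_Phi \<sigma> W b d L p) K\<bar> \<le> eta (F_Phi \<Sigma> W b d L p) K"
proof -
  have q: "vol K * lower ((F_Phi \<Sigma> W b d L p) K) \<le> quad rule (f_Phi \<sigma> W b d L p) K \<and> quad rule (f_Phi \<sigma> W b d L p) K \<le> vol K * upper ((F_Phi \<Sigma> W b d L p) K)"
    by (rule quad_bounds[OF rule K]) (use ff_in[OF K] in \<open>auto simp: set_of_eq\<close>)
  have "\<bar>(LINT x:set_box K|(lebesgue_d (d 0)). (f_Phi \<sigma> W b d L p) x) - quad rule (f_Phi \<sigma> W b d L p) K\<bar> \<le> vol K * upper ((F_Phi \<Sigma> W b d L p) K) - vol K * lower ((F_Phi \<Sigma> W b d L p) K)"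
    using int_bounds[OF K] q by (intro interval_diff) auto
  also have "\<dots> = eta (F_Phi \<Sigma> W b d L p) K" unfolding eta_def width_def by (simp add: algebra_simps)
  finally show ?thesis .
qed

lemma int_partition:
  assumes inv: "partinv (d 0) \<Omega> P"
  shows "(LINT x:set_box \<Omega>|(lebesgue_d (d 0)). (f_Phi \<sigma> W b d L p) x) = (\<Sum>K\<in>P. LINT x:set_box K|(lebesgue_d (d 0)). (f_Phi \<sigma> W b d L p) x)"
proof -
  note pi = inv[unfolded partinv_def]
  have finP: "finite P" using pi by (rule conjunct1)
  have elP: "\<And>K. K \<in> P \<Longrightarrow> posbox (d 0) K \<and> set_box K \<subseteq> set_box \<Omega>"
    using pi[THEN conjunct2, THEN conjunct1] by blast
  have sepP: "\<And>K1 K2. K1 \<in> P \<Longrightarrow> K2 \<in> P \<Longrightarrow> K1 \<noteq> K2 \<Longrightarrow>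
        (\<exists>j<d 0. upper (K1 ! j) \<le> lower (K2 ! j) \<or> upper (K2 ! j) \<le> lower (K1 ! j))"
    using pi[THEN conjunct2, THEN conjunct2, THEN conjunct1] by blast
  have unP: "(\<Union>K\<in>P. set_box K) = set_box \<Omega>"
    using pi[THEN conjunct2, THEN conjunct2, THEN conjunct2] .
  have len: "length K = d 0" if "K \<in> P" for K using elP[OF that] by (simp add: posbox_def)
  have ae: "AE x in (lebesgue_d (d 0)). (x \<in> set_box K1 \<and> x \<in> set_box K2) \<longrightarrow> K1 = K2"
    if K1: "K1 \<in> P" and K2: "K2 \<in> P" for K1 K2
  proof (cases "K1 = K2")
    case True then show ?thesis by simp
  next
    case False
    then obtain j where j: "j < d 0" "upper (K1 ! j) \<le> lower (K2 ! j) \<or> upper (K2 ! j) \<le> lower (K1 ! j)"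
      using sepP[OF K1 K2] by blast
    define c where "c = (if upper (K1 ! j) \<le> lower (K2 ! j) then upper (K1 ! j) else upper (K2 ! j))"
    have "x j = c" if "x \<in> set_box K1" "x \<in> set_box K2" for x
    proof -
      have "x j \<in> set_of (K1 ! j)" "x j \<in> set_of (K2 ! j)"
        using set_box_comp[OF that(1)] set_box_comp[OF that(2)] j len[OF K1] len[OF K2] by auto
      then show ?thesis using j unfolding c_def set_of_eq by auto
    qed
    then have "{x \<in> space (lebesgue_d (d 0)). \<not> ((x \<in> set_box K1 \<and> x \<in> set_box K2) \<longrightarrow> K1 = K2)} \<subseteq> {x \<in> space (lebesgue_d (d 0)). x j = c}"
      using False by auto
    then show ?thesis by (rule AE_I'[OF null_hyper[OF j(1)]])
  qed
  have "(LINT x:set_box \<Omega>|(lebesgue_d (d 0)). (f_Phi \<sigma> W b d L p) x) = (LINT x:(\<Union>K\<in>P. set_box K)|(lebesgue_d (d 0)). (f_Phi \<sigma> W b d L p) x)" unfolding unP ..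
  also have "\<dots> = (\<Sum>K\<in>P. LINT x:set_box K|(lebesgue_d (d 0)). (f_Phi \<sigma> W b d L p) x)"
    by (rule set_integral_finite_UN_AE[OF finP ae]) (auto simp: set_box_sets len ff_integrable)
  finally show ?thesis .
qed

lemma global_err:
  assumes inv: "partinv (d 0) \<Omega> P" and rule: "valid_quad_rule (d 0) rule"
  shows "\<bar>(LINT x:set_box \<Omega>|(lebesgue_d (d 0)). (f_Phi \<sigma> W b d L p) x) - (\<Sum>K\<in>P. quad rule (f_Phi \<sigma> W b d L p) K)\<bar> \<le> (\<Sum>K\<in>P. eta (F_Phi \<Sigma> W b d L p) K)"
proof -
  have len: "length K = d 0" if "K \<in> P" for K
    using inv that unfolding partinv_def posbox_def by blast
  have "\<bar>(LINT x:set_box \<Omega>|(lebesgue_d (d 0)). (f_Phi \<sigma> W b d L p) x) - (\<Sum>K\<in>P. quad rule (f_Phi \<sigma> W b d L p) K)\<bar>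
      = \<bar>\<Sum>K\<in>P. (LINT x:set_box K|(lebesgue_d (d 0)). (f_Phi \<sigma> W b d L p) x) - quad rule (f_Phi \<sigma> W b d L p) K\<bar>"
    unfolding int_partition[OF inv] by (simp add: sum_subtractf)
  also have "\<dots> \<le> (\<Sum>K\<in>P. \<bar>(LINT x:set_box K|(lebesgue_d (d 0)). (f_Phi \<sigma> W b d L p) x) - quad rule (f_Phi \<sigma> W b d L p) K\<bar>)" by (rule sum_abs)
  also have "\<dots> \<le> (\<Sum>K\<in>P. eta (F_Phi \<Sigma> W b d L p) K)" by (intro sum_mono local_err[OF len rule])
  finally show ?thesis .
qed

lemma Lp_eq:
  assumes Om: "length \<Omega> = d 0"
  shows "Lp_norm_nn \<sigma> W b d L p \<Omega> = (LINT x:set_box \<Omega>|(lebesgue_d (d 0)). (f_Phi \<sigma> W b d L p) x) powr (1 / p)"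
proof -
  let ?g = "\<lambda>i x. \<bar>nn \<sigma> W b d L x i\<bar> powr p"
  have gi: "set_integrable (lebesgue_d (d 0)) (set_box \<Omega>) (?g i)" if "i < d (Suc L)" for i
  proof (rule set_integrable_bounded[where B="\<bar>upper ((F_Phi \<Sigma> W b d L p) \<Omega>)\<bar>"])
    show "set_box \<Omega> \<in> sets (lebesgue_d (d 0))" using Om by (rule set_box_sets)
    show "emeasure (lebesgue_d (d 0)) (set_box \<Omega>) < \<infinity>" using Om by (rule fin_box)
    show "?g i \<in> borel_measurable (lebesgue_d (d 0))" by (rule absp_meas[OF cont])
    fix x assume x: "x \<in> set_box \<Omega>"
    have "?g i x \<le> (f_Phi \<sigma> W b d L p) x" unfolding f_Phi_def using that by (intro member_le_sum) auto
    also have "\<dots> \<le> upper ((F_Phi \<Sigma> W b d L p) \<Omega>)" using ff_in[OF Om x] by (simp add: set_of_eq)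
    finally show "\<bar>?g i x\<bar> \<le> \<bar>upper ((F_Phi \<Sigma> W b d L p) \<Omega>)\<bar>" by simp
  qed
  have "(\<Sum>i<d (Suc L). LINT x:set_box \<Omega>|(lebesgue_d (d 0)). ?g i x) = (LINT x:set_box \<Omega>|(lebesgue_d (d 0)). (\<Sum>i<d (Suc L). ?g i x))"
    unfolding set_lebesgue_integral_def scaleR_sum_right
    by (subst Bochner_Integration.integral_sum) (use gi in \<open>auto simp: set_integrable_def\<close>)
  then show ?thesis unfolding Lp_norm_nn_def f_Phi_def by simp
qed

end

lemma powr_subadd:
  fixes x y r :: real
  assumes "0 \<le> x" "0 \<le> y" "0 < r" "r \<le> 1"
  shows "(x + y) powr r \<le> x powr r + y powr r"
proof (cases "x + y = 0")
  case True then show ?thesis using assms by simp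
next
  case False
  then have s: "0 < x + y" using assms by simp
  have k: "t \<le> t powr r" if "0 \<le> t" "t \<le> 1" for t :: real
    using powr_mono'[of r 1 t] that assms by simp
  have "x powr r = (x + y) powr r * (x / (x + y)) powr r"
    using s assms by (simp add: powr_mult[symmetric])
  moreover have "y powr r = (x + y) powr r * (y / (x + y)) powr r"
    using s assms by (simp add: powr_mult[symmetric])
  moreover have "x / (x + y) + y / (x + y) \<le> (x / (x + y)) powr r + (y / (x + y)) powr r"
    using k[of "x / (x + y)"] k[of "y / (x + y)"] s assms by (simp add: divide_le_eq_1)
  then have "(x + y) powr r * (x / (x + y) + y / (x + y))
      \<le> (x + y) powr r * ((x / (x + y)) powr r + (y / (x + y)) powr r)"
    by (rule mult_left_mono) simp
  ultimately have "x powr r + y powr r \<ge> (x + y) powr r * (x / (x + y) + y / (x + y))"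
    by (simp add: distrib_left)
  moreover have "x / (x + y) + y / (x + y) = 1" using s by (simp add: add_divide_distrib[symmetric])
  ultimately show ?thesis by simp
qed

lemma powr_diff_abs:
  fixes a b r :: real
  assumes "0 \<le> a" "0 \<le> b" "0 < r" "r \<le> 1"
  shows "\<bar>a powr r - b powr r\<bar> \<le> \<bar>a - b\<bar> powr r"
proof -
  have main: "x powr r - y powr r \<le> (x - y) powr r" if "0 \<le> y" "y \<le> x" for x y :: real
    using powr_subadd[of y "x - y" r] that assms by simp
  show ?thesis
  proof (cases "b \<le> a")
    case True
    have "b powr r \<le> a powr r" using True assms by (intro powr_mono2) auto
    then show ?thesis using main[OF assms(2) True] True by simp
  next
    case False
    have "a powr r \<le> b powr r" using False assms by (intro powr_mono2) auto
    then show ?thesis using main[OF assms(1)] False by simp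
  qed
qed

theorem corollary4p6:
  fixes \<sigma> :: "real \<Rightarrow> real" and \<Sigma> :: "real interval \<Rightarrow> real interval"
    and W :: "nat \<Rightarrow> nat \<Rightarrow> nat \<Rightarrow> real" and b :: "nat \<Rightarrow> nat \<Rightarrow> real"
    and d :: "nat \<Rightarrow> nat" and L :: nat
    and p \<theta> \<rho> :: real and \<Omega> :: box
  assumes cont: "continuous_on UNIV \<sigma>"
    and encl: "real_enclosure \<sigma> \<Sigma>"
    and hold: "\<exists>C \<gamma>. C > 0 \<and> 0 < \<gamma> \<and> \<gamma> \<le> 1 \<and> real_holder \<Sigma> C \<gamma>"
    and p: "1 \<le> p"
    and theta: "0 < \<theta>" "\<theta> < 1"
    and rho: "0 < \<rho>" "\<rho> < 1"
    and Omega_dim: "length \<Omega> = d 0"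
    and Omega_int: "\<forall>j<d 0. lower (\<Omega> ! j) < upper (\<Omega> ! j)"
  shows "continuous_on UNIV (f_Phi \<sigma> W b d L p)
    \<and> box_enclosure (d 0) \<Omega> (f_Phi \<sigma> W b d L p) (F_Phi \<Sigma> W b d L p)
    \<and> (\<exists>C \<gamma>. C > 0 \<and> 0 < \<gamma> \<and> \<gamma> \<le> 1 \<and> box_holder (d 0) \<Omega> (F_Phi \<Sigma> W b d L p) C \<gamma>)
    \<and> (\<forall>C \<gamma> rule. C > 0 \<longrightarrow> 0 < \<gamma> \<longrightarrow> \<gamma> \<le> 1
         \<longrightarrow> box_holder (d 0) \<Omega> (F_Phi \<Sigma> W b d L p) C \<gamma>
         \<longrightarrow> valid_quad_rule (d 0) rule
         \<longrightarrow> (\<forall>n.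
               \<bar>Lp_norm_nn \<sigma> W b d L p \<Omega>
                  - adaquad_Q (f_Phi \<sigma> W b d L p) (F_Phi \<Sigma> W b d L p) rule \<theta> \<rho> C \<gamma> \<Omega> n powr (1 / p)\<bar>
                 \<le> adaquad_eta (F_Phi \<Sigma> W b d L p) \<theta> \<rho> C \<gamma> \<Omega> n powr (1 / p)
             \<and> adaquad_eta (F_Phi \<Sigma> W b d L p) \<theta> \<rho> C \<gamma> \<Omega> (Suc n)
                 \<le> (1 - \<theta> * (1 - \<rho>)) * adaquad_eta (F_Phi \<Sigma> W b d L p) \<theta> \<rho> C \<gamma> \<Omega> n))"
proof (intro conjI allI impI)
  let ?f = "f_Phi \<sigma> W b d L p" and ?F = "F_Phi \<Sigma> W b d L p"
  let ?mu = "lebesgue_d (d 0)"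
  show "continuous_on UNIV ?f" by (rule f_cont[OF cont p])
  show "box_enclosure (d 0) \<Omega> ?f ?F" by (rule F_encl[OF encl]) (use p Omega_dim in auto)
  show "\<exists>C \<gamma>. C > 0 \<and> 0 < \<gamma> \<and> \<gamma> \<le> 1 \<and> box_holder (d 0) \<Omega> ?F C \<gamma>"
    by (rule F_holder[where d=d and \<Omega>=\<Omega> and W=W and b=b and L=L, OF encl hold p Omega_dim])
  fix C \<gamma> :: real and rule n
  assume C: "C > 0" and g: "0 < \<gamma>" "\<gamma> \<le> 1" and hb: "box_holder (d 0) \<Omega> ?F C \<gamma>"
    and rule: "valid_quad_rule (d 0) rule"
  show "adaquad_eta ?F \<theta> \<rho> C \<gamma> \<Omega> (Suc n) \<le> (1 - \<theta> * (1 - \<rho>)) * adaquad_eta ?F \<theta> \<rho> C \<gamma> \<Omega> n"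
    by (rule adaquad_contract[where dm="d 0", OF hb C g(1) rho theta Omega_dim Omega_int])
  let ?P = "adaquad_P ?F \<theta> \<rho> C \<gamma> \<Omega> n"
  have inv: "partinv (d 0) \<Omega> ?P" using adaquad_inv[where dm="d 0", OF C rho(1) _ Omega_dim Omega_int] theta by simp
  define A where "A = (LINT x:set_box \<Omega>|?mu. ?f x)"
  define Q where "Q = adaquad_Q ?f ?F rule \<theta> \<rho> C \<gamma> \<Omega> n"
  define E where "E = adaquad_eta ?F \<theta> \<rho> C \<gamma> \<Omega> n"
  have err: "\<bar>A - Q\<bar> \<le> E"
    unfolding A_def Q_def E_def adaquad_Q_def adaquad_eta_def
    by (rule global_err[where d=d and W=W and b=b and L=L, OF cont encl p inv rule])
  have A0: "0 \<le> A"
  proof -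
    have "(LINT x:set_box \<Omega>|?mu. (0::real)) \<le> A"
      unfolding A_def
      by (rule set_integral_mono[OF const_integrable[where d=d, OF cont encl p Omega_dim] ff_integrable[where d=d and W=W and b=b and L=L, OF cont encl p Omega_dim]])
         (simp add: ff_nonneg[OF cont encl p])
    then show ?thesis by simp
  qed
  have Q0: "0 \<le> Q"
    unfolding Q_def adaquad_Q_def
  proof (rule sum_nonneg)
    fix K assume K: "K \<in> ?P"
    have len: "length K = d 0" using inv K unfolding partinv_def posbox_def by blast
    have "vol K * 0 \<le> quad rule ?f K \<and> quad rule ?f K \<le> vol K * upper (?F K)"
      by (rule quad_bounds[OF rule len])
         (use ff_nonneg[OF cont encl p] ff_in[where d=d and W=W and b=b and L=L, OF cont encl p len] in \<open>auto simp: set_of_eq\<close>)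
    then show "0 \<le> quad rule ?f K" by simp
  qed
  have r: "0 < 1 / p" "1 / p \<le> 1" using p by auto
  have "\<bar>A powr (1 / p) - Q powr (1 / p)\<bar> \<le> \<bar>A - Q\<bar> powr (1 / p)"
    by (rule powr_diff_abs[OF A0 Q0 r])
  also have "\<dots> \<le> E powr (1 / p)" using err r by (intro powr_mono2) auto
  finally show "\<bar>Lp_norm_nn \<sigma> W b d L p \<Omega> - adaquad_Q ?f ?F rule \<theta> \<rho> C \<gamma> \<Omega> n powr (1 / p)\<bar>
      \<le> adaquad_eta ?F \<theta> \<rho> C \<gamma> \<Omega> n powr (1 / p)"
    unfolding Lp_eq[where d=d and W=W and b=b and L=L, OF cont encl p Omega_dim] A_def[symmetric] Q_def[symmetric] E_def[symmetric] .
qed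

end
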